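(* Under the standing assumptions on $f$, let $\ell>0$, $\beta=\ell d$, let $x_1,\dots,x_d$ be i.i.d. with density $f^\beta/N(\beta)$ and, independently, $y_1,\dots,y_d$ i.i.d. $N(0,(\beta|H|)^{-1})$. Then $$W(d):=\sum_{i=1}^d\frac{\beta\,h'''(0)}{6}\left(y_i^3-x_i^3\right)$$ converges weakly as $d\to\infty$ to $$N\left(-\frac{15\,h'''(0)^2}{36\,\ell\,|H|^3},\ \frac{30\,h'''(0)^2}{36\,\ell\,|H|^3}\right).$$
   Context: Standing assumptions: $f:\mathbb{R}\to(0,\infty)$ is an unnormalised univariate density with $f\in C^5$, $f(0)=1$, $f'(0)=0$, and $0$ is the unique global maximiser of $f$. Let $h:=\log f$ and $H:=h''(0)$, assumed $H<0$; there is $L>0$ with $|h^{(5)}(x)|<L$ for all $x\in\mathbb{R}$. Polynomial tails: there exist $\gamma,M,K>0$ with $\sup_{|x|>M} f(x)|x|^{\gamma}<K$. Dutchman's cap condition: there exists $\delta_2\in(0,M)$ such that $f(x)\le\exp(-x^2|H|/4)$ for $|x|<\delta_2$ and $f(x)\le\exp(-\delta_2^2|H|/4)$ for $\delta_2\le|x|\le M$. Normalisation: $N(\beta):=\int_{\mathbb{R}}f(x)^\beta\,dx$. A normal distribution $N(m,0)$ is understood as the point mass at $m$. *)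

theory Defs
  imports "HOL-Probability.Probability"
begin

definition normal_law :: "real \<Rightarrow> real \<Rightarrow> real measure" where
  "normal_law m v = (if v = 0 then return borel m else density lborel (normal_density m (sqrt v)))"

definition Nconst :: "(real \<Rightarrow> real) \<Rightarrow> real \<Rightarrow> real" where
  "Nconst f \<beta> = integral\<^sup>L lborel (\<lambda>x. f x powr \<beta>)"

definition W_law :: "(real \<Rightarrow> real) \<Rightarrow> real \<Rightarrow> real \<Rightarrow> real \<Rightarrow> nat \<Rightarrow> real measure" where
  "W_law f H h3 l d =
     (let \<beta> = l * real d;
          Px = density lborel (\<lambda>x. ennreal (f x powr \<beta> / Nconst f \<beta>));
          Py = normal_law 0 (1 / (\<beta> * \<bar>H\<bar>))
      in distr ((PiM {..<d} (\<lambda>_. Px)) \<Otimes>\<^sub>M (PiM {..<d} (\<lambda>_. Py))) borel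
           (\<lambda>(xs, ys). \<Sum>i<d. \<beta> * h3 / 6 * (ys i ^ 3 - xs i ^ 3)))"

end

theory Submission
  imports Defs "HOL-Real_Asymp.Real_Asymp"
begin


lemma exp_diff_le: "\<bar>exp a - exp b\<bar> \<le> \<bar>a - b\<bar> * exp (max a b)" for a b :: real
proof -
  have *: "exp y - exp x \<le> (y - x) * exp y" if "x \<le> y" for x y :: real
  proof -
    have "exp (x - y) \<ge> 1 + (x - y)" by (rule exp_ge_add_one_self)
    hence "exp y * exp (x - y) \<ge> exp y * (1 + (x - y))" by (intro mult_left_mono) auto
    moreover have "exp y * exp (x - y) = exp x" by (simp add: exp_diff)
    ultimately show ?thesis by (simp add: algebra_simps)
  qed
  show ?thesis
  proof (cases "a \<le> b")
    case True thus ?thesis using *[OF True] by (simp add: max_def abs_if)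
  next
    case False thus ?thesis using *[of b a] by (simp add: max_def abs_if)
  qed
qed

lemma complex_pow_limit:
  fixes z :: "nat \<Rightarrow> complex"
  assumes lim: "(\<lambda>n. of_nat n * (z n - 1)) \<longlonglongrightarrow> w"
  shows "(\<lambda>n. z n ^ n) \<longlonglongrightarrow> exp w"
proof -
  define q :: "complex \<Rightarrow> complex" where "q = (\<lambda>y. if y = 1 then 1 else Ln y / (y - 1))"
  have "(Ln has_field_derivative inverse 1) (at 1)"
    by (rule has_field_derivative_Ln) (auto simp: complex_nonpos_Reals_iff)
  hence "((\<lambda>y. (Ln y - Ln 1) / (y - 1)) \<longlongrightarrow> 1) (at 1)"
    by (simp add: has_field_derivative_iff)
  hence "((\<lambda>y. q y) \<longlongrightarrow> 1) (at 1)"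
    unfolding q_def by (rule Lim_transform_eventually) (auto simp: eventually_at_filter)
  hence cq: "isCont q 1" by (simp add: isCont_def q_def)
  have "(\<lambda>n. of_nat n * (z n - 1) / of_nat n) \<longlonglongrightarrow> 0"
    by (intro tendsto_divide_0[OF lim] tendsto_of_nat)
  hence "(\<lambda>n. z n - 1) \<longlonglongrightarrow> 0"
    by (rule Lim_transform_eventually) (auto simp: eventually_sequentially intro!: exI[of _ 1])
  hence z1: "z \<longlonglongrightarrow> 1" using tendsto_add_const_iff[of "-1" z 1] by (simp add: LIM_zero_iff)
  hence "(\<lambda>n. q (z n)) \<longlonglongrightarrow> q 1" by (rule isCont_tendsto_compose[OF cq])
  hence "(\<lambda>n. of_nat n * (z n - 1) * q (z n)) \<longlonglongrightarrow> w * 1"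
    by (intro tendsto_mult lim) (simp add: q_def)
  hence "(\<lambda>n. exp (of_nat n * (z n - 1) * q (z n))) \<longlonglongrightarrow> exp w"
    by (intro tendsto_exp) simp
  moreover have "\<forall>\<^sub>F n in sequentially. exp (of_nat n * (z n - 1) * q (z n)) = z n ^ n"
  proof -
    have "\<forall>\<^sub>F n in sequentially. z n \<noteq> 0"
      using z1 by (rule tendsto_imp_eventually_ne) simp
    thus ?thesis
    proof eventually_elim
      case (elim n)
      have "of_nat n * (z n - 1) * q (z n) = of_nat n * Ln (z n)"
        by (auto simp: q_def)
      also have "exp (\<dots>) = exp (Ln (z n)) ^ n" by (rule exp_of_nat_mult)
      also have "\<dots> = z n ^ n" using elim by simp
      finally show ?case .
    qed
  qed
  ultimately show ?thesis by (rule Lim_transform_eventually)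
qed


lemma gauss_int:
  assumes c: "c > 0"
  shows "integrable lborel (\<lambda>u::real. \<bar>u\<bar>^k * exp (- c * u\<^sup>2))"
proof -
  define \<sigma> where "\<sigma> = sqrt (1/(2*c))"
  have \<sigma>: "\<sigma> > 0" using c by (simp add: \<sigma>_def)
  have \<sigma>2: "\<sigma>\<^sup>2 = 1/(2*c)" using c by (simp add: \<sigma>_def)
  have "integrable lborel (\<lambda>u. normal_density 0 \<sigma> u * \<bar>u - 0\<bar>^k)"
    using \<sigma> by (rule integrable_normal_moment_abs)
  hence A: "integrable lborel (\<lambda>u. sqrt (2*pi*\<sigma>\<^sup>2) * (normal_density 0 \<sigma> u * \<bar>u - 0\<bar>^k))"
    by (rule integrable_mult_right)
  have eq: "(\<lambda>u. sqrt (2*pi*\<sigma>\<^sup>2) * (normal_density 0 \<sigma> u * \<bar>u - 0\<bar>^k)) = (\<lambda>u. \<bar>u\<bar>^k * exp (- c * u\<^sup>2))"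
    using c \<sigma> by (intro ext) (simp add: normal_density_def \<sigma>2 field_simps)
  show ?thesis using A unfolding eq .
qed

locale lap =
  fixes f :: "real \<Rightarrow> real" and H a3 \<delta> C s \<beta>0 :: real
  assumes fpos: "\<And>x. 0 < f x"
    and fcont: "continuous_on UNIV f"
    and fle1: "\<And>x. f x \<le> 1"
    and Hneg: "H < 0"
    and \<delta>pos: "0 < \<delta>"
    and Cnn: "0 \<le> C"
    and Cbound: "\<And>x. \<bar>x\<bar> < \<delta> \<Longrightarrow> \<bar>ln (f x) - H * x\<^sup>2 / 2\<bar> \<le> C * \<bar>x\<bar>^3"
    and lim3: "((\<lambda>x. (ln (f x) - H * x\<^sup>2 / 2) / x^3) \<longlongrightarrow> a3 / 6) (at 0)"
    and cap: "\<And>x. \<bar>x\<bar> < \<delta> \<Longrightarrow> f x \<le> exp (- x\<^sup>2 * \<bar>H\<bar> / 4)"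
    and s0: "0 < s" and s1: "s < 1" and sbound: "\<And>x. \<delta> \<le> \<bar>x\<bar> \<Longrightarrow> f x \<le> s"
    and \<beta>0pos: "0 < \<beta>0"
    and \<beta>0int: "\<And>k. k \<le> 10 \<Longrightarrow> integrable lborel (\<lambda>x. \<bar>x\<bar>^k * f x powr \<beta>0)"
begin

lemma fmeas[measurable]: "f \<in> borel_measurable borel"
  using fcont by (rule borel_measurable_continuous_onI)

definition G :: "real \<Rightarrow> real" where "G u = exp (H * u\<^sup>2 / 2)"
definition \<sigma>0 :: real where "\<sigma>0 = sqrt (- 1 / H)"

lemma \<sigma>0pos: "\<sigma>0 > 0" using Hneg by (simp add: \<sigma>0_def)
lemma \<sigma>0sq: "\<sigma>0\<^sup>2 = -1/H" using Hneg by (simp add: \<sigma>0_def)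

lemma G_normal: "G u = sqrt (2*pi*\<sigma>0\<^sup>2) * normal_density 0 \<sigma>0 u"
  using Hneg by (simp add: G_def normal_density_def \<sigma>0sq field_simps)

lemma G_meas[measurable]: "G \<in> borel_measurable borel"
  unfolding G_def by measurable

lemma G_le: "G u \<le> exp (- \<bar>H\<bar> * u\<^sup>2 / 4)"
  using Hneg by (simp add: G_def)

lemma gint: "integrable lborel (\<lambda>u. \<bar>u\<bar>^k * exp (- \<bar>H\<bar> * u\<^sup>2 / 4))"
proof -
  have "integrable lborel (\<lambda>u::real. \<bar>u\<bar>^k * exp (- (\<bar>H\<bar>/4) * u\<^sup>2))"
    using gauss_int[of "\<bar>H\<bar>/4" k] Hneg by simp
  thus ?thesis by simp
qed

lemma G_int_abs: "integrable lborel (\<lambda>u. \<bar>u\<bar>^k * G u)"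
proof (rule Bochner_Integration.integrable_bound[OF gint[of k]])
  show "AE x in lborel. norm (\<bar>x\<bar> ^ k * G x) \<le> norm (\<bar>x\<bar> ^ k * exp (- \<bar>H\<bar> * x\<^sup>2 / 4))"
    using G_le by (intro AE_I2) (simp add: abs_mult G_def mult_left_mono)
qed simp

lemma G_int: "integrable lborel (\<lambda>u. u^k * G u)"
  by (rule Bochner_Integration.integrable_bound[OF G_int_abs[of k]])
     (auto simp: G_def abs_mult power_abs)

lemma G_int0: "integrable lborel G"
  using G_int[of 0] by simp

lemma G_integral0: "(\<integral>u. G u \<partial>lborel) = sqrt (2*pi*\<sigma>0\<^sup>2)"
  using \<sigma>0pos by (simp add: G_normal)

lemma G_integral6: "(\<integral>u. u^6 * G u \<partial>lborel) = sqrt (2*pi*\<sigma>0\<^sup>2) * (15 / \<bar>H\<bar>^3)"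
proof -
  have "(\<integral>u. u^6 * G u \<partial>lborel) = sqrt (2*pi*\<sigma>0\<^sup>2) * (\<integral>u. normal_density 0 \<sigma>0 u * (u - 0)^(2*3) \<partial>lborel)"
    by (subst integral_mult_right_zero[symmetric]) (simp add: G_normal mult_ac)
  also have "(\<integral>u. normal_density 0 \<sigma>0 u * (u - 0)^(2*3) \<partial>lborel) = fact (2*3) / ((2 / \<sigma>0\<^sup>2)^3 * fact 3)"
    using \<sigma>0pos by (rule integral_normal_moment_even)
  also have "\<dots> = 15 / \<bar>H\<bar>^3"
    using Hneg by (simp add: \<sigma>0sq fact_numeral power3_eq_cube abs_if field_simps)
  finally show ?thesis .
qed

lemma G_integral3: "(\<integral>u. u^3 * G u \<partial>lborel) = 0"
proof -
  have "(\<integral>u. u^3 * G u \<partial>lborel) = sqrt (2*pi*\<sigma>0\<^sup>2) * (\<integral>u. normal_density 0 \<sigma>0 u * (u - 0)^(2*1+1) \<partial>lborel)"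
    by (subst integral_mult_right_zero[symmetric]) (simp add: G_normal mult_ac)
  also have "(\<integral>u. normal_density 0 \<sigma>0 u * (u - 0)^(2*1+1) \<partial>lborel) = 0"
    using \<sigma>0pos by (rule integral_normal_moment_odd)
  finally show ?thesis by simp
qed

lemma G_integral0_pos: "(\<integral>u. G u \<partial>lborel) > 0"
  using \<sigma>0pos by (simp add: G_integral0)

end


lemma sq_aux: "\<beta> > 0 \<Longrightarrow> \<beta> * (u / sqrt \<beta>)\<^sup>2 = u\<^sup>2"
  by (simp add: power_divide)

lemma cu_aux: "\<beta> > 0 \<Longrightarrow> \<beta> * \<bar>u / sqrt \<beta>\<bar>^3 = \<bar>u\<bar>^3 / sqrt \<beta>"
proof -
  assume b: "\<beta> > 0"
  define t where "t = sqrt \<beta>"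
  have t: "t > 0" "\<beta> = t\<^sup>2" using b by (auto simp: t_def)
  show ?thesis unfolding t_def[symmetric] using t
    by (simp add: abs_divide power_divide field_simps power2_eq_square power3_eq_cube)
qed

lemma cu_aux2: "\<beta> > 0 \<Longrightarrow> \<beta> * (u / sqrt \<beta>)^3 = u^3 / sqrt \<beta>"
proof -
  assume b: "\<beta> > 0"
  define t where "t = sqrt \<beta>"
  have t: "t > 0" "\<beta> = t\<^sup>2" using b by (auto simp: t_def)
  show ?thesis unfolding t_def[symmetric] using t
    by (simp add: power_divide field_simps power2_eq_square power3_eq_cube)
qed

lemma reg_aux: "\<beta> > 0 \<Longrightarrow> (\<bar>u / sqrt \<beta>\<bar> < \<delta>) = (\<bar>u\<bar> < \<delta> * sqrt \<beta>)"
  by (simp add: abs_divide divide_less_eq)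

context lap
begin

lemma ln_f0: "ln (f 0) = 0"
  using Cbound[of 0] \<delta>pos by simp

lemma fpow_exp: "f x powr \<beta> = exp (\<beta> * ln (f x))"
  using fpos[of x] by (simp add: powr_def)

definition F :: "real \<Rightarrow> real \<Rightarrow> real" where
  "F \<beta> u = (if \<bar>u\<bar> < \<delta> * sqrt \<beta> then exp (\<beta> * ln (f (u / sqrt \<beta>))) else 0)"

lemma F_meas[measurable]: "F \<beta> \<in> borel_measurable borel"
  unfolding F_def by measurable

lemma F_nonneg: "F \<beta> u \<ge> 0" by (simp add: F_def)

lemma ln_cap: "\<bar>x\<bar> < \<delta> \<Longrightarrow> ln (f x) \<le> - x\<^sup>2 * \<bar>H\<bar> / 4"
  using cap[of x] fpos[of x] by (metis ln_exp ln_le_cancel_iff exp_gt_zero)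

lemma A_le: assumes b: "\<beta> > 0" and u: "\<bar>u\<bar> < \<delta> * sqrt \<beta>"
  shows "\<beta> * ln (f (u / sqrt \<beta>)) \<le> - \<bar>H\<bar> * u\<^sup>2 / 4"
proof -
  have "\<bar>u / sqrt \<beta>\<bar> < \<delta>" using reg_aux[OF b] u by simp
  hence "\<beta> * ln (f (u / sqrt \<beta>)) \<le> \<beta> * (- (u / sqrt \<beta>)\<^sup>2 * \<bar>H\<bar> / 4)"
    using b by (intro mult_left_mono ln_cap) auto
  also have "\<dots> = - \<bar>H\<bar> * (\<beta> * (u / sqrt \<beta>)\<^sup>2) / 4" by (simp add: algebra_simps)
  also have "\<dots> = - \<bar>H\<bar> * u\<^sup>2 / 4" using sq_aux[OF b] by simp
  finally show ?thesis .
qed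

lemma D_bound: assumes b: "\<beta> > 0" and u: "\<bar>u\<bar> < \<delta> * sqrt \<beta>"
  shows "\<bar>\<beta> * ln (f (u / sqrt \<beta>)) - H * u\<^sup>2 / 2\<bar> \<le> C * \<bar>u\<bar>^3 / sqrt \<beta>"
proof -
  let ?x = "u / sqrt \<beta>"
  have x: "\<bar>?x\<bar> < \<delta>" using reg_aux[OF b] u by simp
  have "\<beta> * ln (f ?x) - H * u\<^sup>2 / 2 = \<beta> * (ln (f ?x) - H * ?x\<^sup>2 / 2)"
    using sq_aux[OF b, of u] by (simp add: algebra_simps)
  hence "\<bar>\<beta> * ln (f ?x) - H * u\<^sup>2 / 2\<bar> = \<beta> * \<bar>ln (f ?x) - H * ?x\<^sup>2 / 2\<bar>"
    using b by (simp add: abs_mult)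
  also have "\<dots> \<le> \<beta> * (C * \<bar>?x\<bar>^3)" using b Cbound[OF x] by (intro mult_left_mono) auto
  also have "\<dots> = C * (\<beta> * \<bar>?x\<bar>^3)" by simp
  also have "\<dots> = C * \<bar>u\<bar>^3 / sqrt \<beta>" using cu_aux[OF b] by simp
  finally show ?thesis .
qed

lemma F_bound: assumes b: "\<beta> > 0" shows "F \<beta> u \<le> exp (- \<bar>H\<bar> * u\<^sup>2 / 4)"
  using A_le[OF b] by (simp add: F_def)

lemma ev_reg: "\<forall>\<^sub>F \<beta> in at_top. \<beta> > 0 \<and> \<bar>u\<bar> < \<delta> * sqrt \<beta>"
proof (rule eventually_conj)
  show "\<forall>\<^sub>F \<beta> in at_top. (\<beta>::real) > 0" by (rule eventually_gt_at_top)
  show "\<forall>\<^sub>F \<beta> in at_top. \<bar>u\<bar> < \<delta> * sqrt \<beta>" using \<delta>pos by real_asymp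
qed

lemma F_ptwise: "((\<lambda>\<beta>. F \<beta> u) \<longlongrightarrow> G u) at_top"
proof -
  have ev: "\<forall>\<^sub>F \<beta> in at_top. \<beta> > 0 \<and> \<bar>u\<bar> < \<delta> * sqrt \<beta>"
    using ev_reg by auto
  have lim0: "((\<lambda>\<beta>. C * \<bar>u\<bar>^3 / sqrt \<beta>) \<longlongrightarrow> 0) at_top" by real_asymp
  have "((\<lambda>\<beta>. \<beta> * ln (f (u / sqrt \<beta>)) - H * u\<^sup>2 / 2) \<longlongrightarrow> 0) at_top"
  proof (rule Lim_null_comparison[OF _ lim0])
    show "\<forall>\<^sub>F \<beta> in at_top. norm (\<beta> * ln (f (u / sqrt \<beta>)) - H * u\<^sup>2 / 2) \<le> C * \<bar>u\<bar>^3 / sqrt \<beta>"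
      using ev by eventually_elim (use D_bound in auto)
  qed
  hence "((\<lambda>\<beta>. \<beta> * ln (f (u / sqrt \<beta>))) \<longlongrightarrow> H * u\<^sup>2 / 2) at_top"
    by (simp add: LIM_zero_iff)
  hence "((\<lambda>\<beta>. exp (\<beta> * ln (f (u / sqrt \<beta>)))) \<longlongrightarrow> G u) at_top"
    unfolding G_def by (rule tendsto_exp)
  thus ?thesis
    by (rule Lim_transform_eventually) (use ev in \<open>auto elim!: eventually_mono simp: F_def\<close>)
qed

end


context lap
begin

definition J :: "(real \<Rightarrow> real) \<Rightarrow> real \<Rightarrow> real" where
  "J \<phi> \<beta> = (\<integral>x. \<phi> x * f x powr \<beta> \<partial>lborel)"
definition In :: "(real \<Rightarrow> real) \<Rightarrow> real \<Rightarrow> real" where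
  "In \<phi> \<beta> = (\<integral>x. (if \<bar>x\<bar> < \<delta> then \<phi> x * f x powr \<beta> else 0) \<partial>lborel)"
definition Out :: "(real \<Rightarrow> real) \<Rightarrow> real \<Rightarrow> real" where
  "Out \<phi> \<beta> = (\<integral>x. (if \<delta> \<le> \<bar>x\<bar> then \<phi> x * f x powr \<beta> else 0) \<partial>lborel)"

lemma fpow_le_\<beta>0: "\<beta>0 \<le> \<beta> \<Longrightarrow> f x powr \<beta> \<le> f x powr \<beta>0"
  using powr_mono'[of \<beta>0 \<beta> "f x"] fpos[of x] fle1[of x] by simp

lemma int_bound:
  assumes "g \<in> borel_measurable borel" "\<And>x. \<bar>g x\<bar> \<le> \<bar>x\<bar>^k * f x powr \<beta>0" "k \<le> 10"
  shows "integrable lborel g"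
  by (rule Bochner_Integration.integrable_bound[OF \<beta>0int[OF assms(3)]]) (use assms in auto)

context
  fixes \<phi> :: "real \<Rightarrow> real" and k :: nat
  assumes \<phi>m[measurable]: "\<phi> \<in> borel_measurable borel"
    and hom: "\<And>c u. c > 0 \<Longrightarrow> \<phi> (c * u) = c^k * \<phi> u"
    and bd: "\<And>u. \<bar>\<phi> u\<bar> \<le> \<bar>u\<bar>^k"
    and k10: "k \<le> 10"
begin

lemma pt_bound: "\<beta>0 \<le> \<beta> \<Longrightarrow> \<bar>\<phi> x * f x powr \<beta>\<bar> \<le> \<bar>x\<bar>^k * f x powr \<beta>0"
  unfolding abs_mult using bd[of x] fpow_le_\<beta>0[of \<beta> x]
  by (intro mult_mono) auto

lemma intJ: "\<beta>0 \<le> \<beta> \<Longrightarrow> integrable lborel (\<lambda>x. \<phi> x * f x powr \<beta>)"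
  by (rule int_bound[OF _ pt_bound k10]) auto

lemma intIn: "\<beta>0 \<le> \<beta> \<Longrightarrow> integrable lborel (\<lambda>x. if \<bar>x\<bar> < \<delta> then \<phi> x * f x powr \<beta> else 0)"
  by (rule int_bound[OF _ _ k10]) (use pt_bound in auto)

lemma intOut: "\<beta>0 \<le> \<beta> \<Longrightarrow> integrable lborel (\<lambda>x. if \<delta> \<le> \<bar>x\<bar> then \<phi> x * f x powr \<beta> else 0)"
  by (rule int_bound[OF _ _ k10]) (use pt_bound in auto)

lemma J_split: "\<beta>0 \<le> \<beta> \<Longrightarrow> J \<phi> \<beta> = In \<phi> \<beta> + Out \<phi> \<beta>"
  unfolding J_def In_def Out_def
  by (subst Bochner_Integration.integral_add[symmetric, OF intIn intOut]) (auto intro!: Bochner_Integration.integral_cong)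

lemma inner_eq: assumes b: "\<beta> > 0"
  shows "sqrt \<beta> ^ (k+1) * In \<phi> \<beta> = (\<integral>u. \<phi> u * F \<beta> u \<partial>lborel)"
proof -
  define c where "c = 1 / sqrt \<beta>"
  have c: "c > 0" using b by (simp add: c_def)
  have "In \<phi> \<beta> = \<bar>c\<bar> *\<^sub>R (\<integral>u. (if \<bar>0 + c * u\<bar> < \<delta> then \<phi> (0 + c * u) * f (0 + c * u) powr \<beta> else 0) \<partial>lborel)"
    unfolding In_def using c by (intro lborel_integral_real_affine) simp
  also have "(\<lambda>u. if \<bar>0 + c * u\<bar> < \<delta> then \<phi> (0 + c * u) * f (0 + c * u) powr \<beta> else 0) = (\<lambda>u. c^k * (\<phi> u * F \<beta> u))"
  proof
    fix u
    have cu: "c * u = u / sqrt \<beta>" by (simp add: c_def)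
    show "(if \<bar>0 + c * u\<bar> < \<delta> then \<phi> (0 + c * u) * f (0 + c * u) powr \<beta> else 0) = c^k * (\<phi> u * F \<beta> u)"
      using reg_aux[OF b, of u \<delta>] hom[OF c, of u] unfolding F_def fpow_exp cu by auto
  qed
  also have "(\<integral>u. c^k * (\<phi> u * F \<beta> u) \<partial>lborel) = c^k * (\<integral>u. \<phi> u * F \<beta> u \<partial>lborel)"
    by (rule integral_mult_right_zero)
  finally have "In \<phi> \<beta> = c * (c^k * (\<integral>u. \<phi> u * F \<beta> u \<partial>lborel))" using c by simp
  hence "sqrt \<beta> ^ (k+1) * In \<phi> \<beta> = (sqrt \<beta> * c) ^ (k+1) * (\<integral>u. \<phi> u * F \<beta> u \<partial>lborel)"
    by (simp add: power_mult_distrib mult_ac)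
  also have "sqrt \<beta> * c = 1" using b by (simp add: c_def)
  finally show ?thesis by simp
qed

lemma out_bound: assumes b: "\<beta>0 \<le> \<beta>"
  shows "\<bar>Out \<phi> \<beta>\<bar> \<le> s powr (\<beta> - \<beta>0) * (\<integral>x. \<bar>x\<bar>^k * f x powr \<beta>0 \<partial>lborel)"
proof -
  have "\<bar>Out \<phi> \<beta>\<bar> \<le> (\<integral>x. \<bar>if \<delta> \<le> \<bar>x\<bar> then \<phi> x * f x powr \<beta> else 0\<bar> \<partial>lborel)"
    unfolding Out_def by (rule integral_abs_bound)
  also have "\<dots> \<le> (\<integral>x. s powr (\<beta> - \<beta>0) * (\<bar>x\<bar>^k * f x powr \<beta>0) \<partial>lborel)"
  proof (rule integral_mono)
    show "integrable lborel (\<lambda>x. \<bar>if \<delta> \<le> \<bar>x\<bar> then \<phi> x * f x powr \<beta> else 0\<bar>)"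
      using intOut[OF b] by (rule integrable_abs)
    show "integrable lborel (\<lambda>x. s powr (\<beta> - \<beta>0) * (\<bar>x\<bar>^k * f x powr \<beta>0))"
      using \<beta>0int[OF k10] by (rule integrable_mult_right)
    fix x
    show "\<bar>if \<delta> \<le> \<bar>x\<bar> then \<phi> x * f x powr \<beta> else 0\<bar> \<le> s powr (\<beta> - \<beta>0) * (\<bar>x\<bar>^k * f x powr \<beta>0)"
    proof (cases "\<delta> \<le> \<bar>x\<bar>")
      case True
      have sp: "f x powr (\<beta> - \<beta>0) \<le> s powr (\<beta> - \<beta>0)"
        using b sbound[OF True] fpos[of x] by (intro powr_mono2) auto
      have "f x powr \<beta> = f x powr \<beta>0 * f x powr (\<beta> - \<beta>0)"
        by (simp add: powr_add[symmetric])
      hence "\<bar>\<phi> x * f x powr \<beta>\<bar> = \<bar>\<phi> x\<bar> * f x powr \<beta>0 * f x powr (\<beta> - \<beta>0)"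
        by (simp add: abs_mult)
      also have "\<dots> \<le> \<bar>x\<bar>^k * f x powr \<beta>0 * s powr (\<beta> - \<beta>0)"
        using bd[of x] sp by (intro mult_mono) auto
      finally show ?thesis using True by (simp add: mult_ac)
    qed auto
  qed
  also have "\<dots> = s powr (\<beta> - \<beta>0) * (\<integral>x. \<bar>x\<bar>^k * f x powr \<beta>0 \<partial>lborel)"
    by (rule integral_mult_right_zero)
  finally show ?thesis .
qed

lemma out_lim: assumes m: "m \<le> 11" shows "((\<lambda>\<beta>. sqrt \<beta> ^ m * Out \<phi> \<beta>) \<longlongrightarrow> 0) at_top"
proof -
  define a where "a = - ln s"
  have a: "a > 0" using s0 s1 by (simp add: a_def)
  define I where "I = (\<integral>x. \<bar>x\<bar>^k * f x powr \<beta>0 \<partial>lborel)"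
  have I: "I \<ge> 0" unfolding I_def by (intro integral_nonneg_AE) auto
  have lim: "((\<lambda>\<beta>. sqrt \<beta> ^ 11 * exp (- (a * \<beta>)) * (exp (a * \<beta>0) * I)) \<longlongrightarrow> 0) at_top"
    using a by (intro tendsto_mult_left_zero) real_asymp
  show ?thesis
  proof (rule Lim_null_comparison[OF _ lim])
    have "\<forall>\<^sub>F \<beta> in at_top. \<beta> \<ge> max \<beta>0 1" by (rule eventually_ge_at_top)
    thus "\<forall>\<^sub>F \<beta> in at_top. norm (sqrt \<beta> ^ m * Out \<phi> \<beta>) \<le> sqrt \<beta> ^ 11 * exp (- (a * \<beta>)) * (exp (a * \<beta>0) * I)"
    proof eventually_elim
      case (elim \<beta>)
      have sp: "s powr (\<beta> - \<beta>0) = exp (- (a * \<beta>)) * exp (a * \<beta>0)"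
        using s0 by (simp add: powr_def a_def exp_add[symmetric] algebra_simps)
      have s1': "sqrt \<beta> \<ge> 1" using elim by simp
      have "norm (sqrt \<beta> ^ m * Out \<phi> \<beta>) = sqrt \<beta> ^ m * \<bar>Out \<phi> \<beta>\<bar>"
        using elim by (simp add: abs_mult)
      also have "\<dots> \<le> sqrt \<beta> ^ 11 * (s powr (\<beta> - \<beta>0) * I)"
        using out_bound[of \<beta>] elim power_increasing[OF m s1'] unfolding I_def
        by (intro mult_mono) auto
      also have "\<dots> = sqrt \<beta> ^ 11 * exp (- (a * \<beta>)) * (exp (a * \<beta>0) * I)"
        by (simp add: sp mult_ac)
      finally show ?case .
    qed
  qed
qed

lemma inner_lim: "((\<lambda>\<beta>. \<integral>u. \<phi> u * F \<beta> u \<partial>lborel) \<longlongrightarrow> (\<integral>u. \<phi> u * G u \<partial>lborel)) at_top"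
proof (rule integral_dominated_convergence_at_top[where w = "\<lambda>u. \<bar>u\<bar>^k * exp (- \<bar>H\<bar> * u\<^sup>2 / 4)"])
  show "integrable lborel (\<lambda>u. \<bar>u\<bar>^k * exp (- \<bar>H\<bar> * u\<^sup>2 / 4))" by (rule gint)
  show "AE u in lborel. ((\<lambda>\<beta>. \<phi> u * F \<beta> u) \<longlongrightarrow> \<phi> u * G u) at_top"
    by (intro AE_I2 tendsto_mult tendsto_const F_ptwise)
  have "\<forall>\<^sub>F \<beta> in at_top. (\<beta>::real) > 0" by (rule eventually_gt_at_top)
  thus "\<forall>\<^sub>F \<beta> in at_top. AE u in lborel. norm (\<phi> u * F \<beta> u) \<le> \<bar>u\<bar>^k * exp (- \<bar>H\<bar> * u\<^sup>2 / 4)"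
  proof eventually_elim
    case (elim \<beta>)
    show ?case
    proof (intro AE_I2)
      fix u
      show "norm (\<phi> u * F \<beta> u) \<le> \<bar>u\<bar>^k * exp (- \<bar>H\<bar> * u\<^sup>2 / 4)"
        unfolding real_norm_def abs_mult abs_of_nonneg[OF F_nonneg] using bd[of u] F_bound[OF elim, of u] F_nonneg[of \<beta> u]
        by (intro mult_mono) auto
    qed
  qed
qed auto

lemma lap_lim: "((\<lambda>\<beta>. sqrt \<beta> ^ (k+1) * J \<phi> \<beta>) \<longlongrightarrow> (\<integral>u. \<phi> u * G u \<partial>lborel)) at_top"
proof -
  have "((\<lambda>\<beta>. (\<integral>u. \<phi> u * F \<beta> u \<partial>lborel) + sqrt \<beta> ^ (k+1) * Out \<phi> \<beta>) \<longlongrightarrow> (\<integral>u. \<phi> u * G u \<partial>lborel) + 0) at_top"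
    using k10 by (intro tendsto_add inner_lim out_lim) auto
  moreover have "\<forall>\<^sub>F \<beta> in at_top. (\<integral>u. \<phi> u * F \<beta> u \<partial>lborel) + sqrt \<beta> ^ (k+1) * Out \<phi> \<beta> = sqrt \<beta> ^ (k+1) * J \<phi> \<beta>"
  proof -
    have "\<forall>\<^sub>F \<beta> in at_top. \<beta> \<ge> max \<beta>0 1" by (rule eventually_ge_at_top)
    thus ?thesis
    proof eventually_elim
      case (elim \<beta>)
      hence "\<beta> > 0" "\<beta>0 \<le> \<beta>" by auto
      thus ?case using inner_eq J_split by (simp add: algebra_simps)
    qed
  qed
  ultimately show ?thesis by (simp add: Lim_transform_eventually)
qed

end

end


context lap
begin

lemma F0: "\<beta> > 0 \<Longrightarrow> F \<beta> 0 = 1"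
  using \<delta>pos by (simp add: F_def ln_f0)

lemma G0: "G 0 = 1" by (simp add: G_def)

lemma hom3: "c > 0 \<Longrightarrow> (c * u) ^ 3 = c ^ 3 * (u::real) ^ 3"
  by (simp add: power_mult_distrib)
lemma bd3: "\<bar>(u::real) ^ 3\<bar> \<le> \<bar>u\<bar> ^ 3" by (simp add: power_abs)

lemma intF: "\<beta> > 0 \<Longrightarrow> integrable lborel (\<lambda>u. u^k * F \<beta> u)"
proof (rule Bochner_Integration.integrable_bound[OF gint[of k]])
  assume b: "\<beta> > 0"
  show "AE u in lborel. norm (u^k * F \<beta> u) \<le> norm (\<bar>u\<bar>^k * exp (- \<bar>H\<bar> * u\<^sup>2 / 4))"
    using F_bound[OF b] F_nonneg
    by (intro AE_I2) (simp add: abs_mult power_abs mult_left_mono)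
qed simp

lemma sqF_ptwise: "((\<lambda>\<beta>. sqrt \<beta> * (F \<beta> u - G u)) \<longlongrightarrow> a3/6 * u^3 * G u) at_top"
proof (cases "u = 0")
  case True
  have "\<forall>\<^sub>F \<beta> in at_top. (\<beta>::real) > 0" by (rule eventually_gt_at_top)
  hence "\<forall>\<^sub>F \<beta> in at_top. sqrt \<beta> * (F \<beta> u - G u) = 0"
    by eventually_elim (simp add: True F0 G0)
  hence "((\<lambda>\<beta>. sqrt \<beta> * (F \<beta> u - G u)) \<longlongrightarrow> 0) at_top" by (rule tendsto_eventually)
  thus ?thesis using True by simp
next
  case False
  define R where "R x = (ln (f x) - H * x\<^sup>2 / 2) / x^3" for x
  define q where "q = (\<lambda>y::real. if y = 0 then 1 else (exp y - 1) / y)"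
  have "(exp has_real_derivative exp 0) (at 0)" by (rule DERIV_exp)
  hence "((\<lambda>y. (exp y - exp 0) / (y - 0)) \<longlongrightarrow> 1) (at (0::real))"
    by (simp add: has_field_derivative_iff)
  hence "(q \<longlongrightarrow> 1) (at 0)"
    unfolding q_def by (rule Lim_transform_eventually) (auto simp: eventually_at_filter)
  hence cq: "isCont q 0" by (simp add: isCont_def q_def)
  have fl: "filterlim (\<lambda>\<beta>. u / sqrt \<beta>) (at 0) at_top"
  proof (rule filterlim_atI)
    show "((\<lambda>\<beta>. u / sqrt \<beta>) \<longlongrightarrow> 0) at_top" by real_asymp
    have "\<forall>\<^sub>F \<beta> in at_top. (\<beta>::real) > 0" by (rule eventually_gt_at_top)
    thus "\<forall>\<^sub>F \<beta> in at_top. u / sqrt \<beta> \<noteq> 0" by eventually_elim (use False in simp)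
  qed
  have Rlim: "((\<lambda>\<beta>. R (u / sqrt \<beta>)) \<longlongrightarrow> a3/6) at_top"
    using filterlim_compose[OF lim3 fl] by (simp add: R_def[abs_def])
  define D where "D \<beta> = u^3 * R (u / sqrt \<beta>) * (1 / sqrt \<beta>)" for \<beta>
  have "((\<lambda>\<beta>. 1 / sqrt \<beta>) \<longlongrightarrow> 0) at_top" by real_asymp
  hence "(D \<longlongrightarrow> u^3 * (a3/6) * 0) at_top" unfolding D_def[abs_def]
    by (intro tendsto_mult tendsto_const Rlim)
  hence "((\<lambda>\<beta>. q (D \<beta>)) \<longlongrightarrow> q 0) at_top"
    by (intro isCont_tendsto_compose[OF cq]) simp
  hence lim: "((\<lambda>\<beta>. G u * (u^3 * R (u / sqrt \<beta>) * q (D \<beta>))) \<longlongrightarrow> G u * (u^3 * (a3/6) * 1)) at_top"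
    by (intro tendsto_mult tendsto_const Rlim) (simp add: q_def)
  have ev: "\<forall>\<^sub>F \<beta> in at_top. G u * (u^3 * R (u / sqrt \<beta>) * q (D \<beta>)) = sqrt \<beta> * (F \<beta> u - G u)"
    using ev_reg[of u]
  proof eventually_elim
    case (elim \<beta>)
    hence b: "\<beta> > 0" and r: "\<bar>u\<bar> < \<delta> * sqrt \<beta>" by auto
    let ?x = "u / sqrt \<beta>"
    have x0: "?x \<noteq> 0" using b False by simp
    have "\<beta> * ln (f ?x) = \<beta> * (ln (f ?x) - H * ?x\<^sup>2 / 2) + H * (\<beta> * ?x\<^sup>2) / 2"
      by (simp add: algebra_simps)
    also have "\<beta> * (ln (f ?x) - H * ?x\<^sup>2 / 2) = \<beta> * ?x^3 * R ?x"
      using x0 by (simp add: R_def)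
    also have "\<beta> * ?x^3 = u^3 / sqrt \<beta>" by (rule cu_aux2[OF b])
    also have "\<beta> * ?x\<^sup>2 = u\<^sup>2" by (rule sq_aux[OF b])
    finally have A: "\<beta> * ln (f ?x) = D \<beta> + H * u\<^sup>2 / 2" by (simp add: D_def)
    have F: "F \<beta> u = G u * exp (D \<beta>)"
      using r by (simp add: F_def A G_def exp_add mult_ac)
    have "sqrt \<beta> * (exp (D \<beta>) - 1) = u^3 * R ?x * q (D \<beta>)"
    proof (cases "D \<beta> = 0")
      case True
      hence "u^3 * R ?x = 0" using b by (simp add: D_def)
      thus ?thesis using True by simp
    next
      case False
      hence "sqrt \<beta> * (exp (D \<beta>) - 1) = sqrt \<beta> * D \<beta> * q (D \<beta>)" by (simp add: q_def)
      also have "sqrt \<beta> * D \<beta> = u^3 * R ?x" using b by (simp add: D_def)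
      finally show ?thesis .
    qed
    moreover have "sqrt \<beta> * (F \<beta> u - G u) = G u * (sqrt \<beta> * (exp (D \<beta>) - 1))"
      by (simp add: F algebra_simps)
    ultimately show ?case by simp
  qed
  show ?thesis using Lim_transform_eventually[OF lim ev] by (simp add: mult_ac)
qed

lemma sqF_bound: assumes b: "\<beta> > 0"
  shows "\<bar>u^3 * (sqrt \<beta> * (F \<beta> u - G u))\<bar> \<le> (C * \<bar>u\<bar>^6 + \<bar>u\<bar>^4 / \<delta>) * exp (- \<bar>H\<bar> * u\<^sup>2 / 4)"
proof (cases "\<bar>u\<bar> < \<delta> * sqrt \<beta>")
  case True
  let ?A = "\<beta> * ln (f (u / sqrt \<beta>))"
  have mx: "max ?A (H * u\<^sup>2 / 2) \<le> - \<bar>H\<bar> * u\<^sup>2 / 4"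
    using A_le[OF b True] G_le[of u] by (auto simp: max_def G_def)
  have "\<bar>F \<beta> u - G u\<bar> = \<bar>exp ?A - exp (H * u\<^sup>2 / 2)\<bar>" using True by (simp add: F_def G_def)
  also have "\<dots> \<le> \<bar>?A - H * u\<^sup>2 / 2\<bar> * exp (max ?A (H * u\<^sup>2 / 2))" by (rule exp_diff_le)
  also have "\<dots> \<le> (C * \<bar>u\<bar>^3 / sqrt \<beta>) * exp (- \<bar>H\<bar> * u\<^sup>2 / 4)"
    using D_bound[OF b True] mx by (intro mult_mono) auto
  finally have FG: "\<bar>F \<beta> u - G u\<bar> \<le> (C * \<bar>u\<bar>^3 / sqrt \<beta>) * exp (- \<bar>H\<bar> * u\<^sup>2 / 4)" .
  have "\<bar>u^3 * (sqrt \<beta> * (F \<beta> u - G u))\<bar> = \<bar>u\<bar>^3 * (sqrt \<beta> * \<bar>F \<beta> u - G u\<bar>)"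
    using b by (simp add: abs_mult power_abs)
  also have "\<dots> \<le> \<bar>u\<bar>^3 * (sqrt \<beta> * ((C * \<bar>u\<bar>^3 / sqrt \<beta>) * exp (- \<bar>H\<bar> * u\<^sup>2 / 4)))"
    using FG b by (intro mult_left_mono) auto
  also have "\<dots> = C * \<bar>u\<bar>^6 * exp (- \<bar>H\<bar> * u\<^sup>2 / 4)"
    using b by (simp add: field_simps power_add[symmetric])
  also have "\<dots> \<le> (C * \<bar>u\<bar>^6 + \<bar>u\<bar>^4 / \<delta>) * exp (- \<bar>H\<bar> * u\<^sup>2 / 4)"
    using \<delta>pos by (intro mult_right_mono) auto
  finally show ?thesis .
next
  case False
  hence sb: "sqrt \<beta> \<le> \<bar>u\<bar> / \<delta>" using \<delta>pos by (simp add: field_simps)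
  have "\<bar>u^3 * (sqrt \<beta> * (F \<beta> u - G u))\<bar> = \<bar>u\<bar>^3 * sqrt \<beta> * G u"
    using False b by (simp add: F_def abs_mult power_abs G_def)
  also have "\<dots> \<le> \<bar>u\<bar>^3 * (\<bar>u\<bar> / \<delta>) * exp (- \<bar>H\<bar> * u\<^sup>2 / 4)"
    using sb G_le[of u] b \<delta>pos by (intro mult_mono) (auto simp: G_def)
  also have "\<dots> = \<bar>u\<bar>^4 / \<delta> * exp (- \<bar>H\<bar> * u\<^sup>2 / 4)" by (simp add: power4_eq_xxxx power3_eq_cube)
  also have "\<dots> \<le> (C * \<bar>u\<bar>^6 + \<bar>u\<bar>^4 / \<delta>) * exp (- \<bar>H\<bar> * u\<^sup>2 / 4)"
    using Cnn by (intro mult_right_mono) auto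
  finally show ?thesis .
qed

lemma lap3: "((\<lambda>\<beta>. sqrt \<beta> ^ 5 * J (\<lambda>x. x^3) \<beta>) \<longlongrightarrow> a3/6 * (\<integral>u. u^6 * G u \<partial>lborel)) at_top"
proof -
  let ?w = "\<lambda>u. (C * \<bar>u\<bar>^6 + \<bar>u\<bar>^4 / \<delta>) * exp (- \<bar>H\<bar> * u\<^sup>2 / 4)"
  have wint: "integrable lborel ?w"
  proof -
    have "integrable lborel (\<lambda>u. C * (\<bar>u\<bar>^6 * exp (- \<bar>H\<bar> * u\<^sup>2 / 4)) + (1/\<delta>) * (\<bar>u\<bar>^4 * exp (- \<bar>H\<bar> * u\<^sup>2 / 4)))"
      by (intro Bochner_Integration.integrable_add integrable_mult_right gint)
    thus ?thesis by (simp add: algebra_simps)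
  qed
  have dc: "((\<lambda>\<beta>. \<integral>u. u^3 * (sqrt \<beta> * (F \<beta> u - G u)) \<partial>lborel) \<longlongrightarrow> (\<integral>u. u^3 * (a3/6 * u^3 * G u) \<partial>lborel)) at_top"
  proof (rule integral_dominated_convergence_at_top[OF _ _ wint])
    show "AE u in lborel. ((\<lambda>\<beta>. u^3 * (sqrt \<beta> * (F \<beta> u - G u))) \<longlongrightarrow> u^3 * (a3/6 * u^3 * G u)) at_top"
      by (intro AE_I2 tendsto_mult tendsto_const sqF_ptwise)
    have "\<forall>\<^sub>F \<beta> in at_top. (\<beta>::real) > 0" by (rule eventually_gt_at_top)
    thus "\<forall>\<^sub>F \<beta> in at_top. AE u in lborel. norm (u^3 * (sqrt \<beta> * (F \<beta> u - G u))) \<le> ?w u"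
      by eventually_elim (intro AE_I2, simp only: real_norm_def sqF_bound)
  qed auto
  have "(\<integral>u. u^3 * (a3/6 * u^3 * G u) \<partial>lborel) = (\<integral>u. a3/6 * (u^6 * G u) \<partial>lborel)"
    by (intro Bochner_Integration.integral_cong) (auto simp: power_add[symmetric] mult_ac)
  also have "\<dots> = a3/6 * (\<integral>u. u^6 * G u \<partial>lborel)" by (rule integral_mult_right_zero)
  finally have dc': "((\<lambda>\<beta>. \<integral>u. u^3 * (sqrt \<beta> * (F \<beta> u - G u)) \<partial>lborel) \<longlongrightarrow> a3/6 * (\<integral>u. u^6 * G u \<partial>lborel)) at_top"
    using dc by simp
  have ol: "((\<lambda>\<beta>. sqrt \<beta> ^ 5 * Out (\<lambda>x. x^3) \<beta>) \<longlongrightarrow> 0) at_top"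
    by (rule out_lim[of "\<lambda>x. x^3" 3]) (auto simp: hom3 bd3)
  have "((\<lambda>\<beta>. (\<integral>u. u^3 * (sqrt \<beta> * (F \<beta> u - G u)) \<partial>lborel) + sqrt \<beta> ^ 5 * Out (\<lambda>x. x^3) \<beta>) \<longlongrightarrow> a3/6 * (\<integral>u. u^6 * G u \<partial>lborel) + 0) at_top"
    by (intro tendsto_add dc' ol)
  moreover have "\<forall>\<^sub>F \<beta> in at_top. (\<integral>u. u^3 * (sqrt \<beta> * (F \<beta> u - G u)) \<partial>lborel) + sqrt \<beta> ^ 5 * Out (\<lambda>x. x^3) \<beta> = sqrt \<beta> ^ 5 * J (\<lambda>x. x^3) \<beta>"
  proof -
    have "\<forall>\<^sub>F \<beta> in at_top. \<beta> \<ge> max \<beta>0 1" by (rule eventually_ge_at_top)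
    thus ?thesis
    proof eventually_elim
      case (elim \<beta>)
      hence b: "\<beta> > 0" "\<beta>0 \<le> \<beta>" by auto
      have ie: "sqrt \<beta> ^ (3+1) * In (\<lambda>x. x^3) \<beta> = (\<integral>u. u^3 * F \<beta> u \<partial>lborel)"
        by (rule inner_eq[of "\<lambda>x. x^3" 3]) (auto simp: hom3 bd3 b)
      have js: "J (\<lambda>x. x^3) \<beta> = In (\<lambda>x. x^3) \<beta> + Out (\<lambda>x. x^3) \<beta>"
        by (rule J_split[of "\<lambda>x. x^3" 3]) (auto simp: hom3 bd3 b)
      have "(\<integral>u. u^3 * (sqrt \<beta> * (F \<beta> u - G u)) \<partial>lborel) = (\<integral>u. sqrt \<beta> * (u^3 * F \<beta> u) - sqrt \<beta> * (u^3 * G u) \<partial>lborel)"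
        by (intro Bochner_Integration.integral_cong) (auto simp: algebra_simps)
      also have "\<dots> = sqrt \<beta> * (\<integral>u. u^3 * F \<beta> u \<partial>lborel) - sqrt \<beta> * (\<integral>u. u^3 * G u \<partial>lborel)"
        using intF[OF b(1), of 3] G_int[of 3]
        by (simp add: Bochner_Integration.integral_diff integrable_mult_right)
      also have "\<dots> = sqrt \<beta> * (\<integral>u. u^3 * F \<beta> u \<partial>lborel)" by (simp add: G_integral3)
      also have "\<dots> = sqrt \<beta> * (sqrt \<beta> ^ (3+1) * In (\<lambda>x. x^3) \<beta>)" by (simp only: ie)
      also have "\<dots> = sqrt \<beta> ^ (Suc (3+1)) * In (\<lambda>x. x^3) \<beta>" by (simp only: power_Suc mult.assoc)
      also have "\<dots> = sqrt \<beta> ^ 5 * In (\<lambda>x. x^3) \<beta>" by simp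
      finally show ?case using js by (simp add: algebra_simps)
    qed
  qed
  ultimately show ?thesis by (simp add: Lim_transform_eventually)
qed

end


lemma char_approx_w:
  fixes p \<phi> :: "real \<Rightarrow> real" and t :: real
  assumes pm[measurable]: "p \<in> borel_measurable borel" and \<phi>m[measurable]: "\<phi> \<in> borel_measurable borel"
    and p0: "\<And>x. p x \<ge> 0"
    and i0: "integrable lborel p" and i1: "integrable lborel (\<lambda>x. p x * \<phi> x)"
    and i2: "integrable lborel (\<lambda>x. p x * \<phi> x ^ 2)" and i3: "integrable lborel (\<lambda>x. p x * \<bar>\<phi> x\<bar> ^ 3)"
    and p1: "(\<integral>x. p x \<partial>lborel) = 1"
  shows "cmod ((\<integral>x. p x *\<^sub>R iexp (t * \<phi> x) \<partial>lborel) -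
           (1 + \<i> * complex_of_real (t * (\<integral>x. p x * \<phi> x \<partial>lborel))
              - complex_of_real (t^2 / 2 * (\<integral>x. p x * \<phi> x ^ 2 \<partial>lborel))))
         \<le> \<bar>t\<bar>^3 / 6 * (\<integral>x. p x * \<bar>\<phi> x\<bar> ^ 3 \<partial>lborel)"
proof -
  define T where "T x = complex_of_real (p x) + \<i> * complex_of_real (t * (p x * \<phi> x))
      - complex_of_real (t^2/2 * (p x * \<phi> x ^ 2))" for x
  have iT: "integrable lborel T" unfolding T_def
    using i0 i1 i2 by (intro Bochner_Integration.integrable_diff Bochner_Integration.integrable_add
        integrable_mult_right integrable_of_real) auto
  have j0: "integrable lborel (\<lambda>x. complex_of_real (p x))" using i0 by auto
  have j1: "integrable lborel (\<lambda>x. \<i> * complex_of_real (t * (p x * \<phi> x)))"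
    using i1 by (intro integrable_mult_right integrable_of_real) auto
  have j2: "integrable lborel (\<lambda>x. complex_of_real (t^2/2 * (p x * \<phi> x ^ 2)))"
    using i2 by (intro integrable_of_real integrable_mult_right)
  have intT: "(\<integral>x. T x \<partial>lborel) = 1 + \<i> * complex_of_real (t * (\<integral>x. p x * \<phi> x \<partial>lborel))
              - complex_of_real (t^2 / 2 * (\<integral>x. p x * \<phi> x ^ 2 \<partial>lborel))"
  proof -
    have "(\<integral>x. T x \<partial>lborel) = (\<integral>x. complex_of_real (p x) + \<i> * complex_of_real (t * (p x * \<phi> x)) \<partial>lborel)
        - (\<integral>x. complex_of_real (t^2/2 * (p x * \<phi> x ^ 2)) \<partial>lborel)"
      unfolding T_def by (rule Bochner_Integration.integral_diff[OF Bochner_Integration.integrable_add[OF j0 j1] j2])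
    also have "(\<integral>x. complex_of_real (p x) + \<i> * complex_of_real (t * (p x * \<phi> x)) \<partial>lborel)
        = (\<integral>x. complex_of_real (p x) \<partial>lborel) + (\<integral>x. \<i> * complex_of_real (t * (p x * \<phi> x)) \<partial>lborel)"
      by (rule Bochner_Integration.integral_add[OF j0 j1])
    also have "(\<integral>x. \<i> * complex_of_real (t * (p x * \<phi> x)) \<partial>lborel) = \<i> * complex_of_real (t * (\<integral>x. p x * \<phi> x \<partial>lborel))"
      by (simp only: integral_mult_right_zero integral_complex_of_real)
    also have "(\<integral>x. complex_of_real (t^2/2 * (p x * \<phi> x ^ 2)) \<partial>lborel) = complex_of_real (t^2/2 * (\<integral>x. p x * \<phi> x ^ 2 \<partial>lborel))"
      by (simp only: integral_mult_right_zero integral_complex_of_real)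
    finally show ?thesis using p1 by simp
  qed
  have iE: "integrable lborel (\<lambda>x. p x *\<^sub>R iexp (t * \<phi> x))"
    by (rule Bochner_Integration.integrable_bound[OF i0]) (auto simp: p0 norm_exp_i_times)
  have "(\<integral>x. p x *\<^sub>R iexp (t * \<phi> x) \<partial>lborel) - (\<integral>x. T x \<partial>lborel)
        = (\<integral>x. p x *\<^sub>R iexp (t * \<phi> x) - T x \<partial>lborel)"
    by (rule Bochner_Integration.integral_diff[symmetric, OF iE iT])
  hence "cmod ((\<integral>x. p x *\<^sub>R iexp (t * \<phi> x) \<partial>lborel) - (\<integral>x. T x \<partial>lborel))
        \<le> (\<integral>x. cmod (p x *\<^sub>R iexp (t * \<phi> x) - T x) \<partial>lborel)"
    by (simp add: integral_norm_bound)
  also have "\<dots> \<le> (\<integral>x. \<bar>t\<bar>^3 / 6 * (p x * \<bar>\<phi> x\<bar> ^ 3) \<partial>lborel)"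
  proof (rule integral_mono)
    show "integrable lborel (\<lambda>x. cmod (p x *\<^sub>R iexp (t * \<phi> x) - T x))"
      by (intro integrable_norm Bochner_Integration.integrable_diff iE iT)
    show "integrable lborel (\<lambda>x. \<bar>t\<bar>^3 / 6 * (p x * \<bar>\<phi> x\<bar> ^ 3))"
      using i3 by (rule integrable_mult_right)
    fix x
    have e: "p x *\<^sub>R iexp (t * \<phi> x) - T x = complex_of_real (p x) *
        (iexp (t * \<phi> x) - (\<Sum>k \<le> 2. (\<i> * complex_of_real (t * \<phi> x))^k / fact k))"
      by (simp add: T_def scaleR_conv_of_real algebra_simps numeral_eq_Suc power2_eq_square)
    have "cmod (p x *\<^sub>R iexp (t * \<phi> x) - T x) \<le> p x * (\<bar>t * \<phi> x\<bar>^3 / fact 3)"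
      unfolding e norm_mult norm_of_real abs_of_nonneg[OF p0] using p0[of x] iexp_approx1[of "t * \<phi> x" 2]
      by (intro mult_left_mono) (auto simp: numeral_3_eq_3)
    also have "\<dots> = \<bar>t\<bar>^3 / 6 * (p x * \<bar>\<phi> x\<bar> ^ 3)"
      by (simp add: abs_mult power_mult_distrib fact_numeral)
    finally show "cmod (p x *\<^sub>R iexp (t * \<phi> x) - T x) \<le> \<bar>t\<bar>^3 / 6 * (p x * \<bar>\<phi> x\<bar> ^ 3)" .
  qed
  also have "\<dots> = \<bar>t\<bar>^3 / 6 * (\<integral>x. p x * \<bar>\<phi> x\<bar> ^ 3 \<partial>lborel)"
    by (rule integral_mult_right_zero)
  finally show ?thesis unfolding intT .
qed

lemma expansion_lim:
  fixes Z :: "real \<Rightarrow> complex" and a b e g :: "real \<Rightarrow> real" and t a' b' :: real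
  assumes ev: "\<forall>\<^sub>F \<beta> in at_top. cmod (Z \<beta> - (1 + \<i> * complex_of_real (t * a \<beta>) - complex_of_real (t^2/2 * b \<beta>))) \<le> e \<beta>"
    and g0: "\<forall>\<^sub>F \<beta> in at_top. g \<beta> \<ge> 0"
    and la: "((\<lambda>\<beta>. g \<beta> * a \<beta>) \<longlongrightarrow> a') at_top"
    and lb: "((\<lambda>\<beta>. g \<beta> * b \<beta>) \<longlongrightarrow> b') at_top"
    and le: "((\<lambda>\<beta>. g \<beta> * e \<beta>) \<longlongrightarrow> 0) at_top"
  shows "((\<lambda>\<beta>. complex_of_real (g \<beta>) * (Z \<beta> - 1)) \<longlongrightarrow> \<i> * complex_of_real (t * a') - complex_of_real (t^2/2 * b')) at_top"
proof -
  let ?R = "\<lambda>\<beta>. Z \<beta> - (1 + \<i> * complex_of_real (t * a \<beta>) - complex_of_real (t^2/2 * b \<beta>))"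
  have r0: "((\<lambda>\<beta>. complex_of_real (g \<beta>) * ?R \<beta>) \<longlongrightarrow> 0) at_top"
  proof (rule Lim_null_comparison[OF _ le])
    show "\<forall>\<^sub>F \<beta> in at_top. norm (complex_of_real (g \<beta>) * ?R \<beta>) \<le> g \<beta> * e \<beta>"
      using ev g0 by eventually_elim (simp add: norm_mult mult_left_mono)
  qed
  have m: "((\<lambda>\<beta>. \<i> * complex_of_real (t * (g \<beta> * a \<beta>)) - complex_of_real (t^2/2 * (g \<beta> * b \<beta>)))
      \<longlongrightarrow> \<i> * complex_of_real (t * a') - complex_of_real (t^2/2 * b')) at_top"
    by (intro tendsto_intros la lb)
  have "((\<lambda>\<beta>. complex_of_real (g \<beta>) * ?R \<beta> + (\<i> * complex_of_real (t * (g \<beta> * a \<beta>)) - complex_of_real (t^2/2 * (g \<beta> * b \<beta>))))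
      \<longlongrightarrow> 0 + (\<i> * complex_of_real (t * a') - complex_of_real (t^2/2 * b'))) at_top"
    by (intro tendsto_add r0 m)
  thus ?thesis by (simp add: algebra_simps)
qed


lemma integrable_eqI: "integrable M f \<Longrightarrow> (\<And>x. g x = f x) \<Longrightarrow> integrable M g"
  by (metis (no_types) ext)

context lap
begin

definition N :: "real \<Rightarrow> real" where "N \<beta> = J (\<lambda>_. 1) \<beta>"
definition pA :: "real \<Rightarrow> real \<Rightarrow> real" where "pA \<beta> x = f x powr \<beta> / N \<beta>"
definition cc :: "real \<Rightarrow> real" where "cc \<beta> = \<beta> * a3 / 6"
definition A :: "real \<Rightarrow> real \<Rightarrow> complex" where
  "A t \<beta> = (\<integral>x. pA \<beta> x *\<^sub>R iexp (t * (- cc \<beta> * x^3)) \<partial>lborel)"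
definition sg :: "real \<Rightarrow> real" where "sg \<beta> = sqrt (1 / (\<beta> * \<bar>H\<bar>))"
definition B :: "real \<Rightarrow> real \<Rightarrow> complex" where
  "B t \<beta> = (\<integral>y. normal_density 0 (sg \<beta>) y *\<^sub>R iexp (t * (cc \<beta> * y^3)) \<partial>lborel)"

definition Z0 where "Z0 = (\<integral>u. G u \<partial>lborel)"
definition M6 where "M6 = (\<integral>u. u^6 * G u \<partial>lborel)"
definition M9 where "M9 = (\<integral>u. \<bar>u\<bar>^9 * G u \<partial>lborel)"

lemma Z0pos: "Z0 > 0" using G_integral0_pos by (simp add: Z0_def)

lemma hom0: "c > 0 \<Longrightarrow> (1::real) = c ^ 0 * 1" by simp
lemma hom6: "c > 0 \<Longrightarrow> (c * u) ^ 6 = c ^ 6 * (u::real) ^ 6" by (simp add: power_mult_distrib)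
lemma hom9: "c > 0 \<Longrightarrow> \<bar>c * u\<bar> ^ 9 = c ^ 9 * \<bar>u::real\<bar> ^ 9" by (simp add: power_mult_distrib abs_mult)
lemma bd6: "\<bar>(u::real) ^ 6\<bar> \<le> \<bar>u\<bar> ^ 6" by (simp add: power_abs)

lemma lim0: "((\<lambda>\<beta>. sqrt \<beta> * N \<beta>) \<longlongrightarrow> Z0) at_top"
  using lap_lim[of "\<lambda>_. 1" 0] by (simp add: N_def Z0_def)
lemma lim6: "((\<lambda>\<beta>. sqrt \<beta> ^ 7 * J (\<lambda>x. x^6) \<beta>) \<longlongrightarrow> M6) at_top"
  using lap_lim[of "\<lambda>x. x^6" 6] by (simp add: M6_def hom6 bd6)
lemma lim9: "((\<lambda>\<beta>. sqrt \<beta> ^ 10 * J (\<lambda>x. \<bar>x\<bar>^9) \<beta>) \<longlongrightarrow> M9) at_top"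
  using lap_lim[of "\<lambda>x. \<bar>x\<bar>^9" 9] by (simp add: M9_def hom9)
lemma limJ3: "((\<lambda>\<beta>. sqrt \<beta> ^ 5 * J (\<lambda>x. x^3) \<beta>) \<longlongrightarrow> a3/6 * M6) at_top"
  using lap3 by (simp add: M6_def)

lemma Npos_ev: "\<forall>\<^sub>F \<beta> in at_top. N \<beta> > 0"
proof -
  have "\<forall>\<^sub>F \<beta> in at_top. sqrt \<beta> * N \<beta> > 0" using order_tendstoD(1)[OF lim0 Z0pos] .
  moreover have "\<forall>\<^sub>F \<beta> in at_top. (\<beta>::real) > 0" by (rule eventually_gt_at_top)
  ultimately show ?thesis by eventually_elim (metis zero_less_mult_pos real_sqrt_gt_zero)
qed

lemma A_bound: assumes b: "\<beta>0 \<le> \<beta>" and Np: "N \<beta> > 0"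
  shows "cmod (A t \<beta> - (1 + \<i> * complex_of_real (t * (- cc \<beta> * J (\<lambda>x. x^3) \<beta> / N \<beta>))
            - complex_of_real (t^2/2 * (cc \<beta> ^ 2 * J (\<lambda>x. x^6) \<beta> / N \<beta>))))
         \<le> \<bar>t\<bar>^3 / 6 * (\<bar>cc \<beta>\<bar>^3 * J (\<lambda>x. \<bar>x\<bar>^9) \<beta> / N \<beta>)"
proof -
  let ?c = "cc \<beta>" and ?N = "N \<beta>"
  have I1: "integrable lborel (\<lambda>x. 1 * f x powr \<beta>)" by (rule intJ[of "\<lambda>_. 1" 0]) (auto simp: b)
  have I3: "integrable lborel (\<lambda>x. x^3 * f x powr \<beta>)" by (rule intJ[of "\<lambda>x. x^3" 3]) (auto simp: hom3 bd3 b)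
  have I6: "integrable lborel (\<lambda>x. x^6 * f x powr \<beta>)" by (rule intJ[of "\<lambda>x. x^6" 6]) (auto simp: hom6 bd6 b)
  have I9: "integrable lborel (\<lambda>x. \<bar>x\<bar>^9 * f x powr \<beta>)" by (rule intJ[of "\<lambda>x. \<bar>x\<bar>^9" 9]) (auto simp: hom9 b)
  have e1: "pA \<beta> x = (1/?N) * (1 * f x powr \<beta>)" for x by (simp add: pA_def)
  have e3: "pA \<beta> x * (- ?c * x^3) = (- ?c / ?N) * (x^3 * f x powr \<beta>)" for x by (simp add: pA_def)
  have e6: "pA \<beta> x * (- ?c * x^3)^2 = (?c^2 / ?N) * (x^6 * f x powr \<beta>)" for x
    by (simp add: pA_def power_mult_distrib field_simps)
  have e9: "pA \<beta> x * \<bar>- ?c * x^3\<bar>^3 = (\<bar>?c\<bar>^3 / ?N) * (\<bar>x\<bar>^9 * f x powr \<beta>)" for x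
  proof -
    have "\<bar>- ?c * x^3\<bar>^3 = \<bar>?c\<bar>^3 * \<bar>x\<bar>^9"
      by (simp add: abs_mult power_mult_distrib power_abs flip: power_mult)
    thus ?thesis by (simp add: pA_def mult_ac)
  qed
  have i0: "integrable lborel (pA \<beta>)"
    by (rule integrable_eqI[OF integrable_mult_right[OF I1] e1])
  have i1: "integrable lborel (\<lambda>x. pA \<beta> x * (- ?c * x^3))"
    by (rule integrable_eqI[OF integrable_mult_right[OF I3] e3])
  have i2: "integrable lborel (\<lambda>x. pA \<beta> x * (- ?c * x^3)^2)"
    by (rule integrable_eqI[OF integrable_mult_right[OF I6] e6])
  have i3: "integrable lborel (\<lambda>x. pA \<beta> x * \<bar>- ?c * x^3\<bar>^3)"
    by (rule integrable_eqI[OF integrable_mult_right[OF I9] e9])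
  have p1: "(\<integral>x. pA \<beta> x \<partial>lborel) = 1"
    using Np by (simp add: e1 N_def J_def)
  have v1: "(\<integral>x. pA \<beta> x * (- ?c * x^3) \<partial>lborel) = - ?c * J (\<lambda>x. x^3) \<beta> / ?N"
    by (simp only: e3 integral_mult_right_zero) (simp add: J_def)
  have v2: "(\<integral>x. pA \<beta> x * (- ?c * x^3)^2 \<partial>lborel) = ?c^2 * J (\<lambda>x. x^6) \<beta> / ?N"
    by (simp only: e6 integral_mult_right_zero) (simp add: J_def)
  have v3: "(\<integral>x. pA \<beta> x * \<bar>- ?c * x^3\<bar>^3 \<partial>lborel) = \<bar>?c\<bar>^3 * J (\<lambda>x. \<bar>x\<bar>^9) \<beta> / ?N"
    by (simp only: e9 integral_mult_right_zero) (simp add: J_def)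
  have pnn: "pA \<beta> x \<ge> 0" for x using Np by (simp add: pA_def)
  have "cmod ((\<integral>x. pA \<beta> x *\<^sub>R iexp (t * (- ?c * x^3)) \<partial>lborel) -
           (1 + \<i> * complex_of_real (t * (\<integral>x. pA \<beta> x * (- ?c * x^3) \<partial>lborel))
              - complex_of_real (t^2 / 2 * (\<integral>x. pA \<beta> x * (- ?c * x^3) ^ 2 \<partial>lborel))))
         \<le> \<bar>t\<bar>^3 / 6 * (\<integral>x. pA \<beta> x * \<bar>- ?c * x^3\<bar> ^ 3 \<partial>lborel)"
    by (rule char_approx_w[OF _ _ pnn i0 i1 i2 i3 p1]) (auto simp: pA_def)
  thus ?thesis unfolding v1 v2 v3 A_def .
qed

lemma B_bound: assumes b: "\<beta> > 0"
  shows "cmod (B t \<beta> - (1 + \<i> * complex_of_real (t * 0)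
            - complex_of_real (t^2/2 * (cc \<beta> ^ 2 * (15 * sg \<beta> ^ 6)))))
         \<le> \<bar>t\<bar>^3 / 6 * (\<bar>cc \<beta>\<bar>^3 * (2^4 * sg \<beta> ^ 9 * 24 * sqrt (2 / pi)))"
proof -
  let ?c = "cc \<beta>" and ?s = "sg \<beta>"
  have s: "?s > 0" using b Hneg by (simp add: sg_def mult_pos_neg)
  let ?p = "normal_density 0 ?s"
  have m3: "integrable lborel (\<lambda>x. ?p x * (x - 0)^3)" using s by (rule integrable_normal_moment)
  have m6: "integrable lborel (\<lambda>x. ?p x * (x - 0)^6)" using s by (rule integrable_normal_moment)
  have m9: "integrable lborel (\<lambda>x. ?p x * \<bar>x - 0\<bar>^9)" using s by (rule integrable_normal_moment_abs)
  have e3: "?p x * (?c * x^3) = ?c * (?p x * (x - 0)^3)" for x by simp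
  have e6: "?p x * (?c * x^3)^2 = ?c^2 * (?p x * (x - 0)^6)" for x by (simp add: power_mult_distrib)
  have e9: "?p x * \<bar>?c * x^3\<bar>^3 = \<bar>?c\<bar>^3 * (?p x * \<bar>x - 0\<bar>^9)" for x
    by (simp add: power_mult_distrib abs_mult power_abs)
  have i1: "integrable lborel (\<lambda>x. ?p x * (?c * x^3))"
    by (rule integrable_eqI[OF integrable_mult_right[OF m3] e3])
  have i2: "integrable lborel (\<lambda>x. ?p x * (?c * x^3)^2)"
    by (rule integrable_eqI[OF integrable_mult_right[OF m6] e6])
  have i3: "integrable lborel (\<lambda>x. ?p x * \<bar>?c * x^3\<bar>^3)"
    by (rule integrable_eqI[OF integrable_mult_right[OF m9] e9])
  have v1: "(\<integral>x. ?p x * (?c * x^3) \<partial>lborel) = 0"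
    using integral_normal_moment_odd[OF s, of 0 1] by (simp only: e3 integral_mult_right_zero) simp
  have v2: "(\<integral>x. ?p x * (?c * x^3)^2 \<partial>lborel) = ?c^2 * (15 * ?s^6)"
  proof -
    have "(\<integral>x. ?p x * (x - 0)^(2*3) \<partial>lborel) = fact (2*3) / ((2 / ?s\<^sup>2)^3 * fact 3)"
      using s by (rule integral_normal_moment_even)
    also have "\<dots> = 15 * ?s^6" using s by (simp add: fact_numeral field_simps power_mult_distrib)
    finally show ?thesis by (simp only: e6 integral_mult_right_zero) simp
  qed
  have v3: "(\<integral>x. ?p x * \<bar>?c * x^3\<bar>^3 \<partial>lborel) = \<bar>?c\<bar>^3 * (2^4 * ?s^9 * 24 * sqrt (2 / pi))"
  proof -
    have "(\<integral>x. ?p x * \<bar>x - 0\<bar>^(2*4+1) \<partial>lborel) = 2^4 * ?s^(2*4+1) * fact 4 * sqrt (2 / pi)"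
      using s by (rule integral_normal_moment_abs_odd)
    thus ?thesis by (simp only: e9 integral_mult_right_zero) (simp add: fact_numeral)
  qed
  have "cmod (B t \<beta> -
           (1 + \<i> * complex_of_real (t * (\<integral>x. ?p x * (?c * x^3) \<partial>lborel))
              - complex_of_real (t^2 / 2 * (\<integral>x. ?p x * (?c * x^3) ^ 2 \<partial>lborel))))
         \<le> \<bar>t\<bar>^3 / 6 * (\<integral>x. ?p x * \<bar>?c * x^3\<bar> ^ 3 \<partial>lborel)"
    unfolding B_def by (rule char_approx_w[OF _ _ _ integrable_normal_density[OF s] i1 i2 i3 integral_normal_density[OF s]]) auto
  thus ?thesis by (simp only: v1 v2 v3)
qed

end


lemma sqrt_pow_even: "(\<beta>::real) \<ge> 0 \<Longrightarrow> sqrt \<beta> ^ (2*n) = \<beta> ^ n"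
  by (simp add: power_mult)
lemma sqrt_pow5: "(\<beta>::real) \<ge> 0 \<Longrightarrow> sqrt \<beta> ^ 5 = sqrt \<beta> * \<beta>^2"
proof -
  assume b: "\<beta> \<ge> 0"
  have "sqrt \<beta> ^ 5 = sqrt \<beta> * sqrt \<beta> ^ (2*2)" by (simp add: numeral_eq_Suc)
  thus ?thesis using sqrt_pow_even[OF b, of 2] by simp
qed
lemma sqrt_pow7: "(\<beta>::real) \<ge> 0 \<Longrightarrow> sqrt \<beta> ^ 7 = sqrt \<beta> * \<beta>^3"
proof -
  assume b: "\<beta> \<ge> 0"
  have "sqrt \<beta> ^ 7 = sqrt \<beta> * sqrt \<beta> ^ (2*3)" by (simp add: numeral_eq_Suc)
  thus ?thesis using sqrt_pow_even[OF b, of 3] by simp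
qed
lemma sqrt_pow10: "(\<beta>::real) \<ge> 0 \<Longrightarrow> sqrt \<beta> ^ 10 = \<beta>^5"
  using sqrt_pow_even[of \<beta> 5] by simp

context lap
begin

lemma M6_eq: "M6 = Z0 * (15 / \<bar>H\<bar>^3)"
  by (simp add: M6_def Z0_def G_integral6 G_integral0)

lemma ev_good: "\<forall>\<^sub>F \<beta> in at_top. \<beta> \<ge> max \<beta>0 1 \<and> N \<beta> > 0"
  using eventually_ge_at_top[of "max \<beta>0 1"] Npos_ev by (rule eventually_conj)

context
  fixes l t :: real
  assumes lpos: "l > 0"
begin

lemma A_lim:
  "((\<lambda>\<beta>. complex_of_real (\<beta>/l) * (A t \<beta> - 1)) \<longlongrightarrow>
     \<i> * complex_of_real (t * (- (a3^2 * M6) / (36 * l * Z0))) - complex_of_real (t^2/2 * (a3^2 * M6 / (36 * l * Z0)))) at_top"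
proof (rule expansion_lim[where e = "\<lambda>\<beta>. \<bar>t\<bar>^3 / 6 * (\<bar>cc \<beta>\<bar>^3 * J (\<lambda>x. \<bar>x\<bar>^9) \<beta> / N \<beta>)"])
  show "\<forall>\<^sub>F \<beta> in at_top. cmod (A t \<beta> - (1 + \<i> * complex_of_real (t * (- cc \<beta> * J (\<lambda>x. x^3) \<beta> / N \<beta>))
            - complex_of_real (t^2/2 * (cc \<beta> ^ 2 * J (\<lambda>x. x^6) \<beta> / N \<beta>))))
         \<le> \<bar>t\<bar>^3 / 6 * (\<bar>cc \<beta>\<bar>^3 * J (\<lambda>x. \<bar>x\<bar>^9) \<beta> / N \<beta>)"
    using ev_good by eventually_elim (intro A_bound, auto)
  show "\<forall>\<^sub>F \<beta> in at_top. \<beta> / l \<ge> 0"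
    using eventually_ge_at_top[of "0::real"] by eventually_elim (use lpos in simp)
  have c0: "((\<lambda>\<beta>. sqrt \<beta> * N \<beta>) \<longlongrightarrow> Z0) at_top" by (rule lim0)
  have Z: "Z0 \<noteq> 0" using Z0pos by simp
  show "((\<lambda>\<beta>. \<beta> / l * (- cc \<beta> * J (\<lambda>x. x^3) \<beta> / N \<beta>)) \<longlongrightarrow> - (a3^2 * M6) / (36 * l * Z0)) at_top"
  proof -
    have "((\<lambda>\<beta>. - (a3 / (6*l)) * ((sqrt \<beta> ^ 5 * J (\<lambda>x. x^3) \<beta>) / (sqrt \<beta> * N \<beta>))) \<longlongrightarrow> - (a3 / (6*l)) * ((a3/6 * M6) / Z0)) at_top"
      by (intro tendsto_intros limJ3 c0 Z)
    moreover have "\<forall>\<^sub>F \<beta> in at_top. - (a3 / (6*l)) * ((sqrt \<beta> ^ 5 * J (\<lambda>x. x^3) \<beta>) / (sqrt \<beta> * N \<beta>)) = \<beta> / l * (- cc \<beta> * J (\<lambda>x. x^3) \<beta> / N \<beta>)"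
      using ev_good
    proof eventually_elim
      case (elim \<beta>)
      hence b: "\<beta> > 0" "N \<beta> > 0" by auto
      show ?case using b lpos by (simp add: sqrt_pow5 cc_def field_simps power2_eq_square)
    qed
    ultimately have "((\<lambda>\<beta>. \<beta> / l * (- cc \<beta> * J (\<lambda>x. x^3) \<beta> / N \<beta>)) \<longlongrightarrow> - (a3 / (6*l)) * ((a3/6 * M6) / Z0)) at_top"
      by (rule Lim_transform_eventually)
    moreover have "- (a3 / (6*l)) * ((a3/6 * M6) / Z0) = - (a3^2 * M6) / (36 * l * Z0)"
      using lpos Z by (simp add: field_simps power2_eq_square)
    ultimately show ?thesis by simp
  qed
  show "((\<lambda>\<beta>. \<beta> / l * (cc \<beta> ^ 2 * J (\<lambda>x. x^6) \<beta> / N \<beta>)) \<longlongrightarrow> a3^2 * M6 / (36 * l * Z0)) at_top"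
  proof -
    have "((\<lambda>\<beta>. (a3^2 / (36*l)) * ((sqrt \<beta> ^ 7 * J (\<lambda>x. x^6) \<beta>) / (sqrt \<beta> * N \<beta>))) \<longlongrightarrow> (a3^2 / (36*l)) * (M6 / Z0)) at_top"
      by (intro tendsto_intros lim6 c0 Z)
    moreover have "\<forall>\<^sub>F \<beta> in at_top. (a3^2 / (36*l)) * ((sqrt \<beta> ^ 7 * J (\<lambda>x. x^6) \<beta>) / (sqrt \<beta> * N \<beta>)) = \<beta> / l * (cc \<beta> ^ 2 * J (\<lambda>x. x^6) \<beta> / N \<beta>)"
      using ev_good
    proof eventually_elim
      case (elim \<beta>)
      hence b: "\<beta> > 0" "N \<beta> > 0" by auto
      show ?case using b lpos by (simp add: sqrt_pow7 cc_def field_simps power2_eq_square power3_eq_cube)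
    qed
    ultimately have "((\<lambda>\<beta>. \<beta> / l * (cc \<beta> ^ 2 * J (\<lambda>x. x^6) \<beta> / N \<beta>)) \<longlongrightarrow> (a3^2 / (36*l)) * (M6 / Z0)) at_top"
      by (rule Lim_transform_eventually)
    moreover have "(a3^2 / (36*l)) * (M6 / Z0) = a3^2 * M6 / (36 * l * Z0)"
      using lpos Z by (simp add: field_simps)
    ultimately show ?thesis by simp
  qed
  show "((\<lambda>\<beta>. \<beta> / l * (\<bar>t\<bar>^3 / 6 * (\<bar>cc \<beta>\<bar>^3 * J (\<lambda>x. \<bar>x\<bar>^9) \<beta> / N \<beta>))) \<longlongrightarrow> 0) at_top"
  proof -
    have "((\<lambda>\<beta>. (\<bar>t\<bar>^3 * \<bar>a3\<bar>^3 / (1296 * l)) * ((sqrt \<beta> ^ 10 * J (\<lambda>x. \<bar>x\<bar>^9) \<beta>) / (sqrt \<beta> * N \<beta>)) * (1 / sqrt \<beta>))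
        \<longlongrightarrow> (\<bar>t\<bar>^3 * \<bar>a3\<bar>^3 / (1296 * l)) * (M9 / Z0) * 0) at_top"
      by (intro tendsto_intros lim9 c0 Z) real_asymp
    moreover have "\<forall>\<^sub>F \<beta> in at_top. (\<bar>t\<bar>^3 * \<bar>a3\<bar>^3 / (1296 * l)) * ((sqrt \<beta> ^ 10 * J (\<lambda>x. \<bar>x\<bar>^9) \<beta>) / (sqrt \<beta> * N \<beta>)) * (1 / sqrt \<beta>)
        = \<beta> / l * (\<bar>t\<bar>^3 / 6 * (\<bar>cc \<beta>\<bar>^3 * J (\<lambda>x. \<bar>x\<bar>^9) \<beta> / N \<beta>))"
      using ev_good
    proof eventually_elim
      case (elim \<beta>)
      hence b: "\<beta> > 0" "N \<beta> > 0" by auto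
      have ab: "\<bar>cc \<beta>\<bar>^3 = \<beta>^3 * \<bar>a3\<bar>^3 / 216"
        using b by (simp add: cc_def abs_mult power_mult_distrib power_divide)
      have ss: "sqrt \<beta> * sqrt \<beta> = \<beta>" using b by simp
      show ?case using b lpos unfolding ab sqrt_pow10[OF less_imp_le[OF b(1)]]
        by (simp add: field_simps ss power_Suc) (simp add: numeral_eq_Suc algebra_simps)
    qed
    ultimately show ?thesis by (simp add: Lim_transform_eventually)
  qed
qed

end
end


context lap
begin

lemma sg_sq: "\<beta> > 0 \<Longrightarrow> sg \<beta> ^ 2 = 1 / (\<beta> * \<bar>H\<bar>)"
  by (simp add: sg_def)

context
  fixes l t :: real
  assumes lpos: "l > 0"
begin

lemma B_lim:
  "((\<lambda>\<beta>. complex_of_real (\<beta>/l) * (B t \<beta> - 1)) \<longlongrightarrow>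
     \<i> * complex_of_real (t * 0) - complex_of_real (t^2/2 * (15 * a3^2 / (36 * l * \<bar>H\<bar>^3)))) at_top"
proof (rule expansion_lim[where e = "\<lambda>\<beta>. \<bar>t\<bar>^3 / 6 * (\<bar>cc \<beta>\<bar>^3 * (2^4 * sg \<beta> ^ 9 * 24 * sqrt (2 / pi)))"
      and a = "\<lambda>_. 0" and b = "\<lambda>\<beta>. cc \<beta> ^ 2 * (15 * sg \<beta> ^ 6)"])
  have ev0: "\<forall>\<^sub>F \<beta> in at_top. (\<beta>::real) > 0" by (rule eventually_gt_at_top)
  show "\<forall>\<^sub>F \<beta> in at_top. cmod (B t \<beta> - (1 + \<i> * complex_of_real (t * 0)
            - complex_of_real (t^2/2 * (cc \<beta> ^ 2 * (15 * sg \<beta> ^ 6)))))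
         \<le> \<bar>t\<bar>^3 / 6 * (\<bar>cc \<beta>\<bar>^3 * (2^4 * sg \<beta> ^ 9 * 24 * sqrt (2 / pi)))"
    using ev0 by eventually_elim (rule B_bound)
  show "\<forall>\<^sub>F \<beta> in at_top. \<beta> / l \<ge> 0"
    using ev0 by eventually_elim (use lpos in simp)
  show "((\<lambda>\<beta>. \<beta> / l * 0) \<longlongrightarrow> 0) at_top" by simp
  have h: "\<bar>H\<bar> > 0" using Hneg by simp
  show "((\<lambda>\<beta>. \<beta> / l * (cc \<beta> ^ 2 * (15 * sg \<beta> ^ 6))) \<longlongrightarrow> 15 * a3^2 / (36 * l * \<bar>H\<bar>^3)) at_top"
  proof (rule tendsto_eventually)
    show "\<forall>\<^sub>F \<beta> in at_top. \<beta> / l * (cc \<beta> ^ 2 * (15 * sg \<beta> ^ 6)) = 15 * a3^2 / (36 * l * \<bar>H\<bar>^3)"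
      using ev0
    proof eventually_elim
      case (elim \<beta>)
      have "sg \<beta> ^ 6 = (sg \<beta> ^ 2) ^ 3" by (simp flip: power_mult)
      also have "\<dots> = (1 / (\<beta> * \<bar>H\<bar>))^3" using elim by (simp add: sg_sq)
      finally have s6: "sg \<beta> ^ 6 = (1 / (\<beta> * \<bar>H\<bar>))^3" .
      show ?case using elim lpos h unfolding s6
        by (simp add: cc_def field_simps power2_eq_square power3_eq_cube)
    qed
  qed
  show "((\<lambda>\<beta>. \<beta> / l * (\<bar>t\<bar>^3 / 6 * (\<bar>cc \<beta>\<bar>^3 * (2^4 * sg \<beta> ^ 9 * 24 * sqrt (2 / pi))))) \<longlongrightarrow> 0) at_top"
  proof -
    define K where "K = \<bar>t\<bar>^3 / 6 * (\<bar>a3\<bar>^3 / 216) * (2^4 * 24 * sqrt (2 / pi)) / (l * \<bar>H\<bar>^4)"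
    define hh where "hh = \<bar>H\<bar>"
    have hh: "hh > 0" using h by (simp add: hh_def)
    have "((\<lambda>\<beta>. K * sqrt (1 / (\<beta> * hh))) \<longlongrightarrow> K * 0) at_top"
      using hh by (intro tendsto_mult tendsto_const) real_asymp
    moreover have "\<forall>\<^sub>F \<beta> in at_top. K * sqrt (1 / (\<beta> * hh)) = \<beta> / l * (\<bar>t\<bar>^3 / 6 * (\<bar>cc \<beta>\<bar>^3 * (2^4 * sg \<beta> ^ 9 * 24 * sqrt (2 / pi))))"
      using ev0
    proof eventually_elim
      case (elim \<beta>)
      have a: "sg \<beta> ^ 9 = sg \<beta> ^ 8 * sg \<beta>" by (simp add: power_Suc2[symmetric] del: power_Suc2)
      have b: "sg \<beta> ^ 8 = (sg \<beta> ^ 2) ^ 4" by (simp flip: power_mult)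
      have s9: "sg \<beta> ^ 9 = (1 / (\<beta> * \<bar>H\<bar>))^4 * sg \<beta>" unfolding a b using elim by (simp add: sg_sq)
      have ab: "\<bar>cc \<beta>\<bar>^3 = \<beta>^3 * \<bar>a3\<bar>^3 / 216"
        using elim by (simp add: cc_def abs_mult power_mult_distrib power_divide)
      show ?case using elim lpos h unfolding s9 ab K_def sg_def hh_def
        by (simp add: field_simps) (simp add: numeral_eq_Suc algebra_simps)
    qed
    ultimately show ?thesis by (simp add: Lim_transform_eventually)
  qed
qed

definition wA where "wA = \<i> * complex_of_real (t * (- (a3^2 * M6) / (36 * l * Z0))) - complex_of_real (t^2/2 * (a3^2 * M6 / (36 * l * Z0)))"
definition wB where "wB = \<i> * complex_of_real (t * 0) - complex_of_real (t^2/2 * (15 * a3^2 / (36 * l * \<bar>H\<bar>^3)))"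

lemma AB_lim: "((\<lambda>\<beta>. complex_of_real (\<beta>/l) * (A t \<beta> * B t \<beta> - 1)) \<longlongrightarrow> wA + wB) at_top"
proof -
  have la: "((\<lambda>\<beta>. complex_of_real (\<beta>/l) * (A t \<beta> - 1)) \<longlongrightarrow> wA) at_top"
    unfolding wA_def by (rule A_lim[OF lpos])
  have lb: "((\<lambda>\<beta>. complex_of_real (\<beta>/l) * (B t \<beta> - 1)) \<longlongrightarrow> wB) at_top"
    unfolding wB_def by (rule B_lim)
  have "((\<lambda>\<beta>. complex_of_real (l/\<beta>) * (complex_of_real (\<beta>/l) * (B t \<beta> - 1))) \<longlongrightarrow> 0 * wB) at_top"
  proof (intro tendsto_mult lb)
    have "((\<lambda>\<beta>. l / \<beta>) \<longlongrightarrow> 0) at_top" by real_asymp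
    from tendsto_of_real[OF this, where 'a=complex]
    show "((\<lambda>\<beta>. complex_of_real (l / \<beta>)) \<longlongrightarrow> 0) at_top" by simp
  qed
  moreover have "\<forall>\<^sub>F \<beta> in at_top. complex_of_real (l/\<beta>) * (complex_of_real (\<beta>/l) * (B t \<beta> - 1)) = B t \<beta> - 1"
    using eventually_gt_at_top[of "0::real"] by eventually_elim (use lpos in simp)
  ultimately have b0: "((\<lambda>\<beta>. B t \<beta> - 1) \<longlongrightarrow> 0) at_top"
    by (simp add: Lim_transform_eventually)
  have "((\<lambda>\<beta>. complex_of_real (\<beta>/l) * (A t \<beta> - 1) + complex_of_real (\<beta>/l) * (B t \<beta> - 1)
        + complex_of_real (\<beta>/l) * (A t \<beta> - 1) * (B t \<beta> - 1)) \<longlongrightarrow> wA + wB + wA * 0) at_top"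
    by (intro tendsto_add tendsto_mult la lb b0)
  moreover have "(\<lambda>\<beta>. complex_of_real (\<beta>/l) * (A t \<beta> - 1) + complex_of_real (\<beta>/l) * (B t \<beta> - 1)
        + complex_of_real (\<beta>/l) * (A t \<beta> - 1) * (B t \<beta> - 1)) = (\<lambda>\<beta>. complex_of_real (\<beta>/l) * (A t \<beta> * B t \<beta> - 1))"
    by (rule ext) algebra
  ultimately show ?thesis by simp
qed

lemma pow_lim: "((\<lambda>d. (A t (l * real d) * B t (l * real d)) ^ d) \<longlongrightarrow> exp (wA + wB)) sequentially"
proof (rule complex_pow_limit)
  have fl: "filterlim (\<lambda>d. l * real d) at_top sequentially"
    by (rule filterlim_tendsto_pos_mult_at_top[OF tendsto_const lpos filterlim_real_sequentially])
  have "((\<lambda>d. complex_of_real ((l * real d)/l) * (A t (l * real d) * B t (l * real d) - 1)) \<longlongrightarrow> wA + wB) sequentially"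
    by (rule filterlim_compose[OF AB_lim fl])
  thus "(\<lambda>d. of_nat d * (A t (l * real d) * B t (l * real d) - 1)) \<longlonglongrightarrow> wA + wB"
    using lpos by simp
qed

end
end


lemma pps: assumes "prob_space M1" "prob_space M2" shows "pair_prob_space M1 M2"
proof -
  interpret M1: prob_space M1 by fact
  interpret M2: prob_space M2 by fact
  show ?thesis by unfold_locales
qed

lemma integral_pair_mult:
  fixes F G :: "_ \<Rightarrow> complex"
  assumes p1: "prob_space M1" and p2: "prob_space M2"
    and Fm[measurable]: "F \<in> borel_measurable M1" and Gm[measurable]: "G \<in> borel_measurable M2"
    and Fb: "\<And>x. norm (F x) \<le> 1" and Gb: "\<And>y. norm (G y) \<le> 1"
  shows "(\<integral>\<omega>. F (fst \<omega>) * G (snd \<omega>) \<partial>(M1 \<Otimes>\<^sub>M M2)) = (\<integral>x. F x \<partial>M1) * (\<integral>y. G y \<partial>M2)"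
proof -
  interpret pair_prob_space M1 M2 using pps[OF p1 p2] .
  have int: "integrable (M1 \<Otimes>\<^sub>M M2) (\<lambda>\<omega>. F (fst \<omega>) * G (snd \<omega>))"
  proof (rule integrable_const_bound[where B=1])
    show "AE \<omega> in M1 \<Otimes>\<^sub>M M2. norm (F (fst \<omega>) * G (snd \<omega>)) \<le> 1"
      using Fb Gb by (intro AE_I2) (simp add: norm_mult mult_le_one)
  qed measurable
  have "(\<integral>\<omega>. F (fst \<omega>) * G (snd \<omega>) \<partial>(M1 \<Otimes>\<^sub>M M2)) = (\<integral>x. (\<integral>y. F x * G y \<partial>M2) \<partial>M1)"
    using integral_fst'[OF int] by simp
  also have "\<dots> = (\<integral>x. F x * (\<integral>y. G y \<partial>M2) \<partial>M1)"
    by (simp add: integral_mult_right_zero)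
  also have "\<dots> = (\<integral>x. F x \<partial>M1) * (\<integral>y. G y \<partial>M2)"
    by (simp add: integral_mult_left_zero)
  finally show ?thesis .
qed

lemma char_normal_law:
  assumes v: "v \<ge> 0"
  shows "char (normal_law m v) t = exp (\<i> * complex_of_real (t * m) - complex_of_real (v * t^2 / 2))"
proof (cases "v = 0")
  case True
  thus ?thesis by (simp add: normal_law_def char_def integral_return)
next
  case False
  define \<sigma> where "\<sigma> = sqrt v"
  have \<sigma>: "\<sigma> > 0" using v False by (simp add: \<sigma>_def)
  have "char (normal_law m v) t = (\<integral>x. normal_density m \<sigma> x *\<^sub>R iexp (t * x) \<partial>lborel)"
    using False by (simp add: normal_law_def char_def integral_density \<sigma>_def)
  also have "\<dots> = \<bar>\<sigma>\<bar> *\<^sub>R (\<integral>u. normal_density m \<sigma> (m + \<sigma> * u) *\<^sub>R iexp (t * (m + \<sigma> * u)) \<partial>lborel)"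
    using \<sigma> by (intro lborel_integral_real_affine) simp
  also have "(\<lambda>u. normal_density m \<sigma> (m + \<sigma> * u) *\<^sub>R iexp (t * (m + \<sigma> * u)))
      = (\<lambda>u. (1/\<sigma>) *\<^sub>R (iexp (t * m) * (std_normal_density u *\<^sub>R iexp ((t * \<sigma>) * u))))"
  proof
    fix u
    have "normal_density m \<sigma> (m + \<sigma> * u) = std_normal_density u / \<sigma>"
      using \<sigma> by (simp add: normal_density_def power_mult_distrib real_sqrt_mult field_simps)
    moreover have "iexp (t * (m + \<sigma> * u)) = iexp (t * m) * iexp ((t * \<sigma>) * u)"
      by (simp add: algebra_simps exp_add[symmetric])
    ultimately show "normal_density m \<sigma> (m + \<sigma> * u) *\<^sub>R iexp (t * (m + \<sigma> * u)) =
        (1/\<sigma>) *\<^sub>R (iexp (t * m) * (std_normal_density u *\<^sub>R iexp ((t * \<sigma>) * u)))"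
      by (simp add: scaleR_conv_of_real algebra_simps)
  qed
  also have "\<bar>\<sigma>\<bar> *\<^sub>R (\<integral>u. (1/\<sigma>) *\<^sub>R (iexp (t * m) * (std_normal_density u *\<^sub>R iexp ((t * \<sigma>) * u))) \<partial>lborel)
      = \<bar>\<sigma>\<bar> *\<^sub>R ((1/\<sigma>) *\<^sub>R (iexp (t * m) * (\<integral>u. std_normal_density u *\<^sub>R iexp ((t * \<sigma>) * u) \<partial>lborel)))"
    by (simp only: integral_scaleR_right integral_mult_right_zero)
  also have "\<dots> = iexp (t * m) * (\<integral>u. std_normal_density u *\<^sub>R iexp ((t * \<sigma>) * u) \<partial>lborel)"
    using \<sigma> by (simp only: scaleR_scaleR abs_of_pos) simp
  also have "(\<integral>u. std_normal_density u *\<^sub>R iexp ((t * \<sigma>) * u) \<partial>lborel) = char std_normal_distribution (t * \<sigma>)"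
    by (simp add: char_def integral_density)
  also have "\<dots> = exp (- ((t * \<sigma>)^2) / 2)" by (simp add: char_std_normal_distribution)
  also have "(t * \<sigma>)^2 = v * t^2" using v by (simp add: \<sigma>_def power_mult_distrib)
  finally have L: "char (normal_law m v) t = iexp (t * m) * complex_of_real (exp (- (v * t\<^sup>2) / 2))" .
  have "exp (\<i> * complex_of_real (t * m) - complex_of_real (v * t^2 / 2))
      = exp (\<i> * complex_of_real (t * m) + complex_of_real (- (v * t^2) / 2))" by simp
  also have "\<dots> = iexp (t * m) * exp (complex_of_real (- (v * t^2) / 2))" by (simp only: exp_add)
  also have "exp (complex_of_real (- (v * t^2) / 2)) = complex_of_real (exp (- (v * t^2) / 2))"
    by (rule exp_of_real)
  finally show ?thesis using L by simp
qed

lemma real_distribution_normal_law: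
  assumes v: "v \<ge> 0" shows "real_distribution (normal_law m v)"
proof (cases "v = 0")
  case True
  thus ?thesis unfolding real_distribution_def real_distribution_axioms_def
    by (simp add: normal_law_def prob_space_return)
next
  case False
  have "sqrt v > 0" using v False by simp
  hence "prob_space (density lborel (normal_density m (sqrt v)))" by (rule prob_space_normal_density)
  thus ?thesis unfolding real_distribution_def real_distribution_axioms_def
    using False by (simp add: normal_law_def)
qed


lemma W_props:
  fixes f :: "real \<Rightarrow> real" and H h3 l t :: real and d :: nat
  assumes b: "l * real d > 0" and Hn: "H \<noteq> 0" and fpos: "\<And>x. f x > 0"
    and fm[measurable]: "f \<in> borel_measurable borel"
    and fi: "integrable lborel (\<lambda>x. f x powr (l * real d))" and Np: "Nconst f (l * real d) > 0"
  shows "real_distribution (W_law f H h3 l d)"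
    and "char (W_law f H h3 l d) t =
      ((\<integral>x. (f x powr (l * real d) / Nconst f (l * real d)) *\<^sub>R iexp (t * (- (l * real d * h3 / 6) * x^3)) \<partial>lborel) *
       (\<integral>y. normal_density 0 (sqrt (1 / (l * real d * \<bar>H\<bar>))) y *\<^sub>R iexp (t * ((l * real d * h3 / 6) * y^3)) \<partial>lborel)) ^ d"
proof -
  define \<beta> where "\<beta> = l * real d"
  define N where "N = Nconst f \<beta>"
  define c where "c = \<beta> * h3 / 6"
  define \<sigma> where "\<sigma> = sqrt (1 / (\<beta> * \<bar>H\<bar>))"
  define Px where "Px = density lborel (\<lambda>x. ennreal (f x powr \<beta> / N))"
  define Py where "Py = normal_law 0 (1 / (\<beta> * \<bar>H\<bar>))"
  have \<beta>: "\<beta> > 0" using b by (simp add: \<beta>_def)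
  have N: "N > 0" using Np by (simp add: N_def \<beta>_def)
  have v: "1 / (\<beta> * \<bar>H\<bar>) > 0" using \<beta> Hn by simp
  have Py_eq: "Py = density lborel (normal_density 0 \<sigma>)"
    using \<beta> Hn by (simp add: Py_def normal_law_def \<sigma>_def)
  have Nint: "N = (\<integral>x. f x powr \<beta> \<partial>lborel)" by (simp add: N_def Nconst_def)
  have fi': "integrable lborel (\<lambda>x. f x powr \<beta>)" using fi by (simp add: \<beta>_def)
  have pPx: "prob_space Px"
  proof
    have "emeasure Px (space Px) = (\<integral>\<^sup>+x. ennreal (f x powr \<beta> / N) \<partial>lborel)"
      by (simp add: Px_def emeasure_density)
    also have "\<dots> = ennreal (\<integral>x. f x powr \<beta> / N \<partial>lborel)"
      using fi' N by (intro nn_integral_eq_integral) auto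
    also have "(\<integral>x. f x powr \<beta> / N \<partial>lborel) = 1" using N by (simp add: Nint)
    finally show "emeasure Px (space Px) = 1" by simp
  qed
  have pPy: "prob_space Py"
    using real_distribution_normal_law[of "1 / (\<beta> * \<bar>H\<bar>)" 0] v
    by (simp add: Py_def real_distribution_def)
  have sPx[measurable_cong]: "sets Px = sets borel" by (simp add: Px_def)
  have sPy[measurable_cong]: "sets Py = sets borel" by (simp add: Py_eq)
  define Q1 where "Q1 = PiM {..<d} (\<lambda>_. Px)"
  define Q2 where "Q2 = PiM {..<d} (\<lambda>_. Py)"
  have pQ1: "prob_space Q1" unfolding Q1_def by (rule prob_space_PiM) (rule pPx)
  have pQ2: "prob_space Q2" unfolding Q2_def by (rule prob_space_PiM) (rule pPy)
  interpret PP: pair_prob_space Q1 Q2 using pps[OF pQ1 pQ2] .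
  have pO: "prob_space (Q1 \<Otimes>\<^sub>M Q2)" by (rule PP.prob_space_axioms)
  define S where "S = (\<lambda>(xs, ys). \<Sum>i<d. \<beta> * h3 / 6 * (ys i ^ 3 - xs i ^ 3 :: real))"
  have Sm[measurable]: "S \<in> borel_measurable (Q1 \<Otimes>\<^sub>M Q2)"
    unfolding S_def Q1_def Q2_def by measurable
  have W: "W_law f H h3 l d = distr (Q1 \<Otimes>\<^sub>M Q2) borel S"
    by (simp add: W_law_def Let_def \<beta>_def N_def Px_def Py_def Q1_def Q2_def S_def)
  show "real_distribution (W_law f H h3 l d)"
    unfolding W using pO by (intro prob_space.real_distribution_distr) auto
  define F where "F xs = (\<Prod>i<d. iexp (t * (- c * xs i ^ 3)))" for xs :: "nat \<Rightarrow> real"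
  define G where "G ys = (\<Prod>i<d. iexp (t * (c * ys i ^ 3)))" for ys :: "nat \<Rightarrow> real"
  have FG: "iexp (t * S \<omega>) = F (fst \<omega>) * G (snd \<omega>)" for \<omega>
  proof -
    obtain xs ys where \<omega>: "\<omega> = (xs, ys)" by (cases \<omega>)
    have "complex_of_real (t * S \<omega>) = (\<Sum>i<d. complex_of_real (t * (- c * xs i ^ 3)) + complex_of_real (t * (c * ys i ^ 3)))"
    proof -
      have r: "t * S \<omega> = (\<Sum>i<d. t * (- c * xs i ^ 3) + t * (c * ys i ^ 3))"
        unfolding \<omega> S_def c_def by (simp add: sum_distrib_left algebra_simps)
      show ?thesis by (simp only: r of_real_sum of_real_add)
    qed
    hence "\<i> * complex_of_real (t * S \<omega>) = (\<Sum>i<d. \<i> * complex_of_real (t * (- c * xs i ^ 3)) + \<i> * complex_of_real (t * (c * ys i ^ 3)))"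
      by (simp add: sum_distrib_left algebra_simps)
    hence "iexp (t * S \<omega>) = exp (\<Sum>i<d. \<i> * complex_of_real (t * (- c * xs i ^ 3)) + \<i> * complex_of_real (t * (c * ys i ^ 3)))"
      by (simp only:)
    also have "\<dots> = (\<Prod>i<d. iexp (t * (- c * xs i ^ 3)) * iexp (t * (c * ys i ^ 3)))"
      by (simp only: exp_sum[OF finite_lessThan] exp_add)
    finally have "iexp (t * S \<omega>) = (\<Prod>i<d. iexp (t * (- c * xs i ^ 3)) * iexp (t * (c * ys i ^ 3)))" .
    thus ?thesis unfolding \<omega> F_def G_def by (simp add: prod.distrib)
  qed
  have Fm[measurable]: "F \<in> borel_measurable Q1" unfolding F_def Q1_def by measurable
  have Gm[measurable]: "G \<in> borel_measurable Q2" unfolding G_def Q2_def by measurable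
  have Fb: "norm (F xs) \<le> 1" for xs unfolding F_def by (simp add: prod_norm[symmetric] norm_exp_i_times)
  have Gb: "norm (G ys) \<le> 1" for ys unfolding G_def by (simp add: prod_norm[symmetric] norm_exp_i_times)
  have "char (W_law f H h3 l d) t = (\<integral>\<omega>. iexp (t * S \<omega>) \<partial>(Q1 \<Otimes>\<^sub>M Q2))"
    unfolding W char_def by (simp add: integral_distr)
  also have "\<dots> = (\<integral>\<omega>. F (fst \<omega>) * G (snd \<omega>) \<partial>(Q1 \<Otimes>\<^sub>M Q2))" by (simp only: FG)
  also have "\<dots> = (\<integral>xs. F xs \<partial>Q1) * (\<integral>ys. G ys \<partial>Q2)"
    by (rule integral_pair_mult[OF pQ1 pQ2 Fm Gm Fb Gb])
  also have "(\<integral>xs. F xs \<partial>Q1) = (\<integral>x. iexp (t * (- c * x ^ 3)) \<partial>Px) ^ d"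
  proof -
    interpret Px: prob_space Px by (rule pPx)
    have psf: "product_sigma_finite (\<lambda>_. Px)"
      unfolding product_sigma_finite_def using Px.sigma_finite_measure_axioms by simp
    have "(\<integral>xs. F xs \<partial>Q1) = (\<Prod>i<d. \<integral>x. iexp (t * (- c * x ^ 3)) \<partial>Px)"
      unfolding F_def Q1_def
      by (rule product_sigma_finite.product_integral_prod[OF psf]) (auto intro!: Px.integrable_const_bound[where B=1] simp: norm_exp_i_times)
    thus ?thesis by simp
  qed
  also have "(\<integral>ys. G ys \<partial>Q2) = (\<integral>y. iexp (t * (c * y ^ 3)) \<partial>Py) ^ d"
  proof -
    interpret Py: prob_space Py by (rule pPy)
    have psf: "product_sigma_finite (\<lambda>_. Py)"
      unfolding product_sigma_finite_def using Py.sigma_finite_measure_axioms by simp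
    have "(\<integral>ys. G ys \<partial>Q2) = (\<Prod>i<d. \<integral>y. iexp (t * (c * y ^ 3)) \<partial>Py)"
      unfolding G_def Q2_def
      by (rule product_sigma_finite.product_integral_prod[OF psf]) (auto intro!: Py.integrable_const_bound[where B=1] simp: norm_exp_i_times)
    thus ?thesis by simp
  qed
  also have "(\<integral>x. iexp (t * (- c * x ^ 3)) \<partial>Px) = (\<integral>x. (f x powr \<beta> / N) *\<^sub>R iexp (t * (- c * x^3)) \<partial>lborel)"
    unfolding Px_def using N by (subst integral_density) auto
  also have "(\<integral>y. iexp (t * (c * y ^ 3)) \<partial>Py) = (\<integral>y. normal_density 0 \<sigma> y *\<^sub>R iexp (t * (c * y^3)) \<partial>lborel)"
    unfolding Py_eq by (subst integral_density) auto
  finally have X: "char (W_law f H h3 l d) t = (\<integral>x. (f x powr \<beta> / N) *\<^sub>R iexp (t * (- c * x^3)) \<partial>lborel) ^ d *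
      (\<integral>y. normal_density 0 \<sigma> y *\<^sub>R iexp (t * (c * y^3)) \<partial>lborel) ^ d" .
  show "char (W_law f H h3 l d) t =
      ((\<integral>x. (f x powr (l * real d) / Nconst f (l * real d)) *\<^sub>R iexp (t * (- (l * real d * h3 / 6) * x^3)) \<partial>lborel) *
       (\<integral>y. normal_density 0 (sqrt (1 / (l * real d * \<bar>H\<bar>))) y *\<^sub>R iexp (t * ((l * real d * h3 / 6) * y^3)) \<partial>lborel)) ^ d"
    unfolding X power_mult_distrib \<beta>_def N_def c_def \<sigma>_def ..
qed


context lap
begin

lemma lap_main:
  assumes lpos: "l > 0"
  shows "weak_conv_m (\<lambda>d. W_law f H a3 l d)
           (normal_law (- 15 * a3\<^sup>2 / (36 * l * \<bar>H\<bar> ^ 3)) (30 * a3\<^sup>2 / (36 * l * \<bar>H\<bar> ^ 3)))"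
proof -
  define \<mu> where "\<mu> = - 15 * a3\<^sup>2 / (36 * l * \<bar>H\<bar> ^ 3)"
  define v where "v = 30 * a3\<^sup>2 / (36 * l * \<bar>H\<bar> ^ 3)"
  have h: "\<bar>H\<bar> > 0" using Hneg by simp
  have v0: "v \<ge> 0" using lpos h by (simp add: v_def)
  have fl: "filterlim (\<lambda>d. l * real d) at_top sequentially"
    by (rule filterlim_tendsto_pos_mult_at_top[OF tendsto_const lpos filterlim_real_sequentially])
  have "\<forall>\<^sub>F d in sequentially. l * real d \<ge> max \<beta>0 1 \<and> N (l * real d) > 0"
    by (rule eventually_compose_filterlim[OF ev_good fl])
  then obtain D where D: "\<And>d. d \<ge> D \<Longrightarrow> l * real d \<ge> max \<beta>0 1 \<and> N (l * real d) > 0"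
    by (auto simp: eventually_sequentially)
  define M' where "M' n = W_law f H a3 l (n + D)" for n
  have good: "l * real (n + D) \<ge> max \<beta>0 1" "N (l * real (n + D)) > 0" for n using D[of "n + D"] by auto
  have NN: "Nconst f \<beta> = N \<beta>" for \<beta> by (simp add: Nconst_def N_def J_def)
  have fi: "integrable lborel (\<lambda>x. f x powr (l * real (n + D)))" for n
    using intJ[of "\<lambda>_. 1" 0 "l * real (n + D)"] good[of n] by simp
  have props: "real_distribution (M' n)"
    "char (M' n) t = (A t (l * real (n + D)) * B t (l * real (n + D))) ^ (n + D)" for n t
  proof -
    have b: "l * real (n + D) > 0" using good[of n] by simp
    show "real_distribution (M' n)" unfolding M'_def
      by (rule W_props(1)[OF b _ fpos fmeas fi]) (use Hneg good[of n] in \<open>simp_all add: NN\<close>)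
    have "char (W_law f H a3 l (n + D)) t = ((\<integral>x. (f x powr (l * real (n + D)) / Nconst f (l * real (n + D))) *\<^sub>R iexp (t * (- (l * real (n + D) * a3 / 6) * x^3)) \<partial>lborel) *
       (\<integral>y. normal_density 0 (sqrt (1 / (l * real (n + D) * \<bar>H\<bar>))) y *\<^sub>R iexp (t * ((l * real (n + D) * a3 / 6) * y^3)) \<partial>lborel)) ^ (n + D)"
      by (rule W_props(2)[OF b _ fpos fmeas fi]) (use Hneg good[of n] in \<open>simp_all add: NN\<close>)
    thus "char (M' n) t = (A t (l * real (n + D)) * B t (l * real (n + D))) ^ (n + D)"
      by (simp add: M'_def A_def B_def pA_def cc_def sg_def NN)
  qed
  have "weak_conv_m M' (normal_law \<mu> v)"
  proof (rule levy_continuity)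
    show "real_distribution (M' n)" for n by (rule props(1))
    show "real_distribution (normal_law \<mu> v)" by (rule real_distribution_normal_law[OF v0])
    fix t
    have "(\<lambda>n. (A t (l * real (n + D)) * B t (l * real (n + D))) ^ (n + D)) \<longlonglongrightarrow> exp (wA l t + wB l t)"
      using LIMSEQ_ignore_initial_segment[OF pow_lim[OF lpos, of t], of D] .
    moreover have "exp (wA l t + wB l t) = char (normal_law \<mu> v) t"
    proof -
      have Z: "Z0 \<noteq> 0" using Z0pos by simp
      have r1: "- (a3^2 * M6) / (36 * l * Z0) = \<mu>"
        using Z lpos h unfolding M6_eq \<mu>_def by (simp add: field_simps)
      have r2: "t^2/2 * (a3^2 * M6 / (36 * l * Z0)) + t^2/2 * (15 * a3^2 / (36 * l * \<bar>H\<bar>^3)) = v * t^2 / 2"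
        using Z lpos h unfolding M6_eq v_def by (simp add: field_simps)
      have "wA l t + wB l t = \<i> * complex_of_real (t * \<mu>) - complex_of_real (v * t^2 / 2)"
        unfolding wA_def[OF lpos] wB_def[OF lpos] r1 r2[symmetric] by (simp add: algebra_simps)
      thus ?thesis using char_normal_law[OF v0, of \<mu> t] by (simp add: mult.commute)
    qed
    ultimately show "(\<lambda>n. char (M' n) t) \<longlonglongrightarrow> char (normal_law \<mu> v) t"
      by (simp add: props(2))
  qed
  hence "\<forall>x. isCont (cdf (normal_law \<mu> v)) x \<longrightarrow> (\<lambda>n. cdf (W_law f H a3 l (n + D)) x) \<longlonglongrightarrow> cdf (normal_law \<mu> v) x"
    by (simp add: weak_conv_m_def weak_conv_def M'_def)
  hence "\<forall>x. isCont (cdf (normal_law \<mu> v)) x \<longrightarrow> (\<lambda>n. cdf (W_law f H a3 l n) x) \<longlonglongrightarrow> cdf (normal_law \<mu> v) x"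
  proof (intro allI impI)
    fix x assume "isCont (cdf (normal_law \<mu> v)) x"
    with \<open>\<forall>x. _\<close> have "(\<lambda>n. cdf (W_law f H a3 l (n + D)) x) \<longlonglongrightarrow> cdf (normal_law \<mu> v) x" by blast
    thus "(\<lambda>n. cdf (W_law f H a3 l n) x) \<longlonglongrightarrow> cdf (normal_law \<mu> v) x"
      by (rule LIMSEQ_offset[where f = "\<lambda>n. cdf (W_law f H a3 l n) x"])
  qed
  thus ?thesis unfolding \<mu>_def[symmetric] v_def[symmetric] weak_conv_m_def weak_conv_def .
qed

end


lemma taylor_part:
  fixes f :: "real \<Rightarrow> real"
  assumes pos: "\<And>x. f x > 0"
    and C5_diff: "\<And>k x. k < 5 \<Longrightarrow> (deriv ^^ k) f differentiable (at x)"
    and f0: "f 0 = 1" and df0: "deriv f 0 = 0"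
  defines "h \<equiv> (\<lambda>x. ln (f x))"
  shows "continuous_on UNIV ((deriv ^^ 3) h)"
    and "\<And>x. x \<noteq> 0 \<Longrightarrow> \<exists>\<xi>. \<bar>\<xi>\<bar> < \<bar>x\<bar> \<and> h x = (deriv ^^ 2) h 0 * x\<^sup>2 / 2 + (deriv ^^ 3) h \<xi> * x^3 / 6"
proof -
  define f1 where "f1 = deriv f"
  define f2 where "f2 = deriv f1"
  define f3 where "f3 = deriv f2"
  have D0: "(f has_real_derivative f1 x) (at x)" for x
    using C5_diff[of 0 x] by (simp add: f1_def DERIV_deriv_iff_real_differentiable)
  have D1: "(f1 has_real_derivative f2 x) (at x)" for x
    using C5_diff[of 1 x] by (simp add: f1_def f2_def DERIV_deriv_iff_real_differentiable)
  have D2: "(f2 has_real_derivative f3 x) (at x)" for x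
    using C5_diff[of 2 x] by (simp add: f1_def f2_def f3_def DERIV_deriv_iff_real_differentiable numeral_2_eq_2)
  have c3: "isCont f3 x" for x
    using C5_diff[of 3 x] by (intro differentiable_imp_continuous_within)
      (simp add: f1_def f2_def f3_def numeral_3_eq_3)
  have c0: "isCont f x" for x using D0 by (rule DERIV_isCont)
  have c1: "isCont f1 x" for x using D1 by (rule DERIV_isCont)
  have c2: "isCont f2 x" for x using D2 by (rule DERIV_isCont)
  have fne: "f x \<noteq> 0" for x using pos[of x] by simp
  define hh1 where "hh1 x = f1 x / f x" for x
  define hh2 where "hh2 x = f2 x / f x - (f1 x / f x) * (f1 x / f x)" for x
  define hh3 where "hh3 x = f3 x / f x - f2 x * f1 x / (f x)^2 - 2 * (f1 x / f x) * (f2 x / f x - f1 x * f1 x / (f x)^2)" for x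
  have E0: "(h has_real_derivative hh1 x) (at x)" for x
    unfolding h_def hh1_def
    by (rule DERIV_ln[THEN DERIV_chain2, OF pos D0, THEN DERIV_cong]) (simp add: divide_inverse mult.commute)
  have E1: "(hh1 has_real_derivative hh2 x) (at x)" for x
    unfolding hh1_def[abs_def] hh2_def
    by (rule DERIV_cong[OF DERIV_divide[OF D1 D0 fne]]) (simp add: field_simps power2_eq_square fne)
  have E2: "(hh2 has_real_derivative hh3 x) (at x)" for x
  proof -
    have q: "((\<lambda>x. f1 x / f x) has_real_derivative (f2 x * f x - f1 x * f1 x) / (f x * f x)) (at x)"
      by (rule DERIV_divide[OF D1 D0 fne])
    have "((\<lambda>x. f2 x / f x - (f1 x / f x) * (f1 x / f x)) has_real_derivative
        (f3 x * f x - f2 x * f1 x) / (f x * f x) - ((f2 x * f x - f1 x * f1 x) / (f x * f x) * (f1 x / f x) + ((f2 x * f x - f1 x * f1 x) / (f x * f x)) * (f1 x / f x))) (at x)"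
      by (rule DERIV_diff[OF DERIV_divide[OF D2 D0 fne] DERIV_mult[OF q q]])
    thus ?thesis unfolding hh2_def[abs_def] hh3_def
      by (rule DERIV_cong) (simp add: field_simps power2_eq_square fne)
  qed
  have dh: "deriv h = hh1" using E0 by (intro ext DERIV_imp_deriv)
  have dh1: "deriv hh1 = hh2" using E1 by (intro ext DERIV_imp_deriv)
  have dh2: "deriv hh2 = hh3" using E2 by (intro ext DERIV_imp_deriv)
  have p1: "(deriv ^^ 1) h = hh1" by (simp add: dh)
  have p2: "(deriv ^^ 2) h = hh2" by (simp add: numeral_2_eq_2 dh dh1)
  have p3: "(deriv ^^ 3) h = hh3" by (simp add: numeral_3_eq_3 dh dh1 dh2)
  show "continuous_on UNIV ((deriv ^^ 3) h)"
    unfolding p3 hh3_def using c0 c1 c2 c3 fne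
    by (intro continuous_at_imp_continuous_on ballI) (intro continuous_intros; simp)
  fix x :: real assume x: "x \<noteq> 0"
  define diff where "diff m = (deriv ^^ m) h" for m
  have DD: "\<forall>m t. m < 3 \<and> - \<bar>x\<bar> \<le> t \<and> t \<le> \<bar>x\<bar> \<longrightarrow> (diff m has_real_derivative diff (Suc m) t) (at t)"
  proof (intro allI impI)
    fix m :: nat and t :: real assume "m < 3 \<and> - \<bar>x\<bar> \<le> t \<and> t \<le> \<bar>x\<bar>"
    hence "m = 0 \<or> m = 1 \<or> m = 2" by auto
    thus "(diff m has_real_derivative diff (Suc m) t) (at t)"
      using E0 E1 E2 p1 p2 p3 by (auto simp: diff_def numeral_2_eq_2 numeral_3_eq_3 dh dh1 dh2)
  qed
  have "\<exists>t. (if x < 0 then x < t \<and> t < 0 else 0 < t \<and> t < x) \<and>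
      h x = (\<Sum>m<3. (diff m 0 / fact m) * (x - 0)^m) + (diff 3 t / fact 3) * (x - 0)^3"
    by (rule Taylor[of 3 diff h "- \<bar>x\<bar>" "\<bar>x\<bar>" 0 x, OF _ _ DD]) (use x in \<open>auto simp: diff_def\<close>)
  then obtain \<xi> where \<xi>: "(if x < 0 then x < \<xi> \<and> \<xi> < 0 else 0 < \<xi> \<and> \<xi> < x)"
    and T: "h x = (\<Sum>m<3. (diff m 0 / fact m) * (x - 0)^m) + (diff 3 \<xi> / fact 3) * (x - 0)^3"
    by blast
  have "(\<Sum>m<3. (diff m 0 / fact m) * (x - 0)^m) = diff 0 0 + diff 1 0 * x + diff 2 0 / 2 * x^2"
    by (simp add: eval_nat_numeral)
  also have "diff 0 0 = 0" by (simp add: diff_def h_def f0)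
  also have "diff 1 0 = 0" by (simp add: diff_def dh hh1_def f1_def df0)
  finally have "h x = (deriv ^^ 2) h 0 * x\<^sup>2 / 2 + (deriv ^^ 3) h \<xi> * x^3 / 6"
    using T by (simp add: diff_def fact_numeral)
  moreover have "\<bar>\<xi>\<bar> < \<bar>x\<bar>" using \<xi> by (auto split: if_splits)
  ultimately show "\<exists>\<xi>. \<bar>\<xi>\<bar> < \<bar>x\<bar> \<and> h x = (deriv ^^ 2) h 0 * x\<^sup>2 / 2 + (deriv ^^ 3) h \<xi> * x^3 / 6"
    by blast
qed


lemma s_exists:
  fixes f :: "real \<Rightarrow> real"
  assumes fcont: "continuous_on UNIV f" and fpos: "\<And>x. f x > 0" and lt1: "\<And>x. x \<noteq> 0 \<Longrightarrow> f x < 1"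
    and \<gamma>: "\<gamma> > 0" and M: "M > 0" and K: "K > 0"
    and tail: "\<And>x. \<bar>x\<bar> > M \<Longrightarrow> f x * \<bar>x\<bar> powr \<gamma> < K"
    and q1: "q < 1" and capq: "\<And>x. \<delta>2 \<le> \<bar>x\<bar> \<Longrightarrow> \<bar>x\<bar> \<le> M \<Longrightarrow> f x \<le> q"
  shows "\<exists>s. 0 < s \<and> s < 1 \<and> (\<forall>x. \<delta>2 \<le> \<bar>x\<bar> \<longrightarrow> f x \<le> s)"
proof -
  define R where "R = max M ((2*K) powr (1/\<gamma>))"
  have MR: "M \<le> R" by (simp add: R_def)
  have tailR: "f x < 1/2" if x: "\<bar>x\<bar> > R" for x
  proof -
    have xM: "\<bar>x\<bar> > M" using x MR by simp
    have "2*K = ((2*K) powr (1/\<gamma>)) powr \<gamma>" using \<gamma> K by (simp add: powr_powr)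
    also have "\<dots> < \<bar>x\<bar> powr \<gamma>"
      using x \<gamma> by (intro powr_less_mono2) (auto simp: R_def)
    finally have P: "2*K < \<bar>x\<bar> powr \<gamma>" .
    have "f x * (2*K) \<le> f x * \<bar>x\<bar> powr \<gamma>" using P fpos[of x] by (intro mult_left_mono) auto
    also have "\<dots> < K" by (rule tail[OF xM])
    finally show ?thesis using K by (simp add: field_simps)
  qed
  define T where "T = {-R..-M} \<union> {M..R}"
  have cT: "compact T" unfolding T_def by (intro compact_Un compact_Icc)
  have nT: "T \<noteq> {}" using MR by (auto simp: T_def)
  obtain x0 where x0: "x0 \<in> T" and mx: "\<And>y. y \<in> T \<Longrightarrow> f y \<le> f x0"
    using continuous_attains_sup[OF cT nT continuous_on_subset[OF fcont]] by auto
  have "x0 \<noteq> 0" using x0 M by (auto simp: T_def)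
  hence fx0: "f x0 < 1" by (rule lt1)
  define s where "s = max (max q (f x0)) (1/2)"
  have "0 < s" "s < 1" using q1 fx0 by (auto simp: s_def)
  moreover have "f x \<le> s" if "\<delta>2 \<le> \<bar>x\<bar>" for x
  proof (cases "\<bar>x\<bar> \<le> M")
    case True thus ?thesis using capq[OF that] by (simp add: s_def)
  next
    case False
    show ?thesis
    proof (cases "\<bar>x\<bar> \<le> R")
      case True
      hence "x \<in> T" unfolding T_def using False by (cases "x \<ge> 0") auto
      thus ?thesis using mx[of x] by (simp add: s_def)
    next
      case False2: False
      thus ?thesis using tailR[of x] by (simp add: s_def)
    qed
  qed
  ultimately show ?thesis by blast
qed

lemma beta0_exists:
  fixes f :: "real \<Rightarrow> real"
  assumes fpos: "\<And>x. f x > 0" and fle1: "\<And>x. f x \<le> 1" and fm[measurable]: "f \<in> borel_measurable borel"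
    and \<gamma>: "\<gamma> > 0" and M: "M > 0" and K: "K > 0"
    and tail: "\<And>x. \<bar>x\<bar> > M \<Longrightarrow> f x * \<bar>x\<bar> powr \<gamma> < K"
  shows "\<exists>\<beta>0>0. \<forall>k\<le>10. integrable lborel (\<lambda>x. \<bar>x\<bar>^k * f x powr \<beta>0)"
proof -
  define \<beta>0 where "\<beta>0 = 12 / \<gamma>"
  have b0: "\<beta>0 > 0" using \<gamma> by (simp add: \<beta>0_def)
  define R1 where "R1 = max M 1"
  have R1: "R1 \<ge> 1" "R1 \<ge> M" by (auto simp: R1_def)
  define w where "w x = R1^10 * indicator {-R1..R1} x + 2 * K powr \<beta>0 * inverse (1 + x\<^sup>2)" for x :: real
  have iinv: "integrable lborel (\<lambda>x::real. inverse (1 + x\<^sup>2))"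
    using integrable_inverse_1_plus_square by (simp add: set_integrable_def einterval_eq_UNIV)
  have wi: "integrable lborel w" unfolding w_def
    using R1 by (intro Bochner_Integration.integrable_add integrable_mult_right iinv integrable_real_indicator)
      (auto simp: emeasure_lborel_Icc)
  have bound: "\<bar>x\<bar>^k * f x powr \<beta>0 \<le> w x" if k: "k \<le> 10" for x k
  proof (cases "\<bar>x\<bar> \<le> R1")
    case True
    have "\<bar>x\<bar>^k \<le> R1^k" using True by (intro power_mono) auto
    also have "\<dots> \<le> R1^10" using R1 k by (intro power_increasing) auto
    finally have a: "\<bar>x\<bar>^k \<le> R1^10" .
    have b: "f x powr \<beta>0 \<le> 1" using b0 fpos[of x] fle1[of x] by (intro powr_le1) auto
    have "\<bar>x\<bar>^k * f x powr \<beta>0 \<le> R1^10 * 1"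
      using a b by (intro mult_mono) auto
    also have "\<dots> \<le> w x" using True by (simp add: w_def indicator_def abs_le_iff)
    finally show ?thesis .
  next
    case False
    hence x1: "\<bar>x\<bar> > 1" and xM: "\<bar>x\<bar> > M" using R1 by auto
    have xp: "\<bar>x\<bar> > 0" using x1 by simp
    have "f x < K / \<bar>x\<bar> powr \<gamma>" using tail[OF xM] xp by (simp add: field_simps)
    hence "f x powr \<beta>0 \<le> (K / \<bar>x\<bar> powr \<gamma>) powr \<beta>0"
      using b0 fpos[of x] by (intro powr_mono2) auto
    also have "\<dots> = K powr \<beta>0 / \<bar>x\<bar> powr (\<gamma> * \<beta>0)" by (simp add: powr_divide powr_powr)
    also have "\<gamma> * \<beta>0 = real 12" using \<gamma> by (simp add: \<beta>0_def)
    also have "\<bar>x\<bar> powr real 12 = \<bar>x\<bar>^12" using xp by (rule powr_realpow)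
    finally have fb: "f x powr \<beta>0 \<le> K powr \<beta>0 / \<bar>x\<bar>^12" .
    have "\<bar>x\<bar>^k \<le> \<bar>x\<bar>^10" using x1 k by (intro power_increasing) auto
    have "\<bar>x\<bar>^k * f x powr \<beta>0 \<le> \<bar>x\<bar>^10 * (K powr \<beta>0 / \<bar>x\<bar>^12)"
      using \<open>\<bar>x\<bar>^k \<le> \<bar>x\<bar>^10\<close> fb by (intro mult_mono) auto
    also have "\<dots> = K powr \<beta>0 / x\<^sup>2" using xp by (simp add: field_simps power_abs power2_eq_square eval_nat_numeral)
    also have "\<dots> \<le> 2 * K powr \<beta>0 * inverse (1 + x\<^sup>2)"
    proof -
      have x2: "x\<^sup>2 \<ge> 1" using x1 by (metis abs_le_square_iff abs_one less_imp_le power_one)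
      have "1 / x\<^sup>2 \<le> 2 / (1 + x\<^sup>2)" using x2 by (simp add: divide_simps)
      hence "K powr \<beta>0 * (1 / x\<^sup>2) \<le> K powr \<beta>0 * (2 / (1 + x\<^sup>2))" by (intro mult_left_mono) auto
      thus ?thesis by (simp add: field_simps)
    qed
    also have "\<dots> \<le> w x" by (simp add: w_def)
    finally show ?thesis .
  qed
  have "integrable lborel (\<lambda>x. \<bar>x\<bar>^k * f x powr \<beta>0)" if "k \<le> 10" for k
    by (rule Bochner_Integration.integrable_bound[OF wi]) (use bound[OF that] in \<open>auto intro!: AE_I2 simp: w_def\<close>)
  thus ?thesis using b0 by blast
qed


theorem lemma1:
  fixes f :: "real \<Rightarrow> real" and L l :: real
  defines "h \<equiv> (\<lambda>x. ln (f x))"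
  defines "H \<equiv> (deriv ^^ 2) h 0"
  assumes pos: "\<And>x. f x > 0"
    and C5_diff: "\<And>k x. k < 5 \<Longrightarrow> (deriv ^^ k) f differentiable (at x)"
    and C5_cont: "continuous_on UNIV ((deriv ^^ 5) f)"
    and f0: "f 0 = 1"
    and df0: "deriv f 0 = 0"
    and maxim: "\<And>x. x \<noteq> 0 \<Longrightarrow> f x < f 0"
    and Hneg: "H < 0"
    and Lpos: "L > 0"
    and h5: "\<And>x. \<bar>(deriv ^^ 5) h x\<bar> < L"
    and tails_cap: "\<exists>\<gamma> M K \<delta>2. \<gamma> > 0 \<and> M > 0 \<and> K > 0 \<and>
        (\<forall>x. \<bar>x\<bar> > M \<longrightarrow> f x * \<bar>x\<bar> powr \<gamma> < K) \<and>
        0 < \<delta>2 \<and> \<delta>2 < M \<and>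
        (\<forall>x. \<bar>x\<bar> < \<delta>2 \<longrightarrow> f x \<le> exp (- x\<^sup>2 * \<bar>H\<bar> / 4)) \<and>
        (\<forall>x. \<delta>2 \<le> \<bar>x\<bar> \<and> \<bar>x\<bar> \<le> M \<longrightarrow> f x \<le> exp (- \<delta>2\<^sup>2 * \<bar>H\<bar> / 4))"
    and lpos: "l > 0"
  shows "weak_conv_m (\<lambda>d. W_law f H ((deriv ^^ 3) h 0) l d)
           (normal_law (- 15 * ((deriv ^^ 3) h 0)\<^sup>2 / (36 * l * \<bar>H\<bar> ^ 3))
                       (30 * ((deriv ^^ 3) h 0)\<^sup>2 / (36 * l * \<bar>H\<bar> ^ 3)))"
proof -
  obtain \<gamma> M K \<delta>2 where \<gamma>: "\<gamma> > 0" and M: "M > 0" and K: "K > 0"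
    and tail: "\<And>x. \<bar>x\<bar> > M \<Longrightarrow> f x * \<bar>x\<bar> powr \<gamma> < K"
    and d0: "0 < \<delta>2" and dM: "\<delta>2 < M"
    and cap1: "\<And>x. \<bar>x\<bar> < \<delta>2 \<Longrightarrow> f x \<le> exp (- x\<^sup>2 * \<bar>H\<bar> / 4)"
    and cap2: "\<And>x. \<delta>2 \<le> \<bar>x\<bar> \<Longrightarrow> \<bar>x\<bar> \<le> M \<Longrightarrow> f x \<le> exp (- \<delta>2\<^sup>2 * \<bar>H\<bar> / 4)"
    using tails_cap by blast
  have fdiff: "f differentiable (at x)" for x using C5_diff[of 0 x] by simp
  have fcont: "continuous_on UNIV f"
    using fdiff by (intro continuous_at_imp_continuous_on ballI differentiable_imp_continuous_within)
  have fm: "f \<in> borel_measurable borel" using fcont by (rule borel_measurable_continuous_onI)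
  have lt1: "f x < 1" if "x \<noteq> 0" for x using maxim[OF that] f0 by simp
  have fle1: "f x \<le> 1" for x using lt1[of x] f0 by (cases "x = 0") auto
  have q1: "exp (- \<delta>2\<^sup>2 * \<bar>H\<bar> / 4) < 1" using d0 Hneg by (simp add: mult_pos_neg)
  obtain s where s0: "0 < s" and s1: "s < 1" and sb: "\<And>x. \<delta>2 \<le> \<bar>x\<bar> \<Longrightarrow> f x \<le> s"
    using s_exists[OF fcont pos lt1 \<gamma> M K tail q1 cap2] by blast
  obtain \<beta>0 where b0: "\<beta>0 > 0" and bi: "\<And>k. k \<le> 10 \<Longrightarrow> integrable lborel (\<lambda>x. \<bar>x\<bar>^k * f x powr \<beta>0)"
    using beta0_exists[OF pos fle1 fm \<gamma> M K tail] by blast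
  define g where "g = (deriv ^^ 3) h"
  have gc: "continuous_on UNIV g"
    unfolding g_def h_def by (rule taylor_part(1)[OF pos C5_diff f0 df0])
  have TP: "\<exists>\<xi>. \<bar>\<xi>\<bar> < \<bar>x\<bar> \<and> ln (f x) - H * x\<^sup>2 / 2 = g \<xi> * x^3 / 6" if "x \<noteq> 0" for x
    using taylor_part(2)[OF pos C5_diff f0 df0 that] unfolding g_def H_def h_def by auto
  obtain y0 where y0: "y0 \<in> {-\<delta>2..\<delta>2}" and my: "\<And>y. y \<in> {-\<delta>2..\<delta>2} \<Longrightarrow> \<bar>g y\<bar> \<le> \<bar>g y0\<bar>"
  proof -
    have gac: "continuous_on UNIV (\<lambda>y. \<bar>g y\<bar>)" using gc by (intro continuous_intros)
    have "\<exists>y0\<in>{-\<delta>2..\<delta>2}. \<forall>y\<in>{-\<delta>2..\<delta>2}. \<bar>g y\<bar> \<le> \<bar>g y0\<bar>"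
      using d0 by (intro continuous_attains_sup[OF compact_Icc _ continuous_on_subset[OF gac]]) auto
    thus ?thesis using that by blast
  qed
  define C where "C = \<bar>g y0\<bar> / 6"
  have Cnn: "C \<ge> 0" by (simp add: C_def)
  have Cbound: "\<bar>ln (f x) - H * x\<^sup>2 / 2\<bar> \<le> C * \<bar>x\<bar>^3" if x: "\<bar>x\<bar> < \<delta>2" for x
  proof (cases "x = 0")
    case True thus ?thesis using f0 by simp
  next
    case False
    then obtain \<xi> where \<xi>: "\<bar>\<xi>\<bar> < \<bar>x\<bar>" and e: "ln (f x) - H * x\<^sup>2 / 2 = g \<xi> * x^3 / 6"
      using TP by blast
    have "\<bar>g \<xi>\<bar> \<le> \<bar>g y0\<bar>" using \<xi> x by (intro my) auto
    hence "\<bar>g \<xi>\<bar> * \<bar>x\<bar>^3 / 6 \<le> \<bar>g y0\<bar> * \<bar>x\<bar>^3 / 6" by (intro divide_right_mono mult_right_mono) auto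
    thus ?thesis unfolding e C_def by (simp add: abs_mult power_abs)
  qed
  have lim3: "((\<lambda>x. (ln (f x) - H * x\<^sup>2 / 2) / x^3) \<longlongrightarrow> g 0 / 6) (at 0)"
    unfolding LIM_eq
  proof (intro allI impI)
    fix r :: real assume r: "r > 0"
    have "isCont g 0" using gc by (simp add: continuous_on_eq_continuous_at)
    hence "g \<midarrow>0\<rightarrow> g 0" by (simp add: isCont_def)
    then obtain e where e: "e > 0" and he: "\<And>y. y \<noteq> 0 \<and> norm (y - 0) < e \<Longrightarrow> norm (g y - g 0) < 6 * r"
      using r unfolding LIM_eq by (metis mult_pos_pos zero_less_numeral)
    show "\<exists>e>0. \<forall>x. x \<noteq> 0 \<and> norm (x - 0) < e \<longrightarrow> norm ((ln (f x) - H * x\<^sup>2 / 2) / x ^ 3 - g 0 / 6) < r"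
    proof (intro exI[of _ e] conjI allI impI e)
      fix x :: real assume x: "x \<noteq> 0 \<and> norm (x - 0) < e"
      then obtain \<xi> where \<xi>: "\<bar>\<xi>\<bar> < \<bar>x\<bar>" and eq: "ln (f x) - H * x\<^sup>2 / 2 = g \<xi> * x^3 / 6"
        using TP by blast
      have q: "(ln (f x) - H * x\<^sup>2 / 2) / x ^ 3 - g 0 / 6 = (g \<xi> - g 0) / 6"
        using x by (simp add: eq field_simps)
      have "\<bar>g \<xi> - g 0\<bar> < 6 * r"
      proof (cases "\<xi> = 0")
        case True thus ?thesis using r by simp
      next
        case False thus ?thesis using he[of \<xi>] \<xi> x by auto
      qed
      thus "norm ((ln (f x) - H * x\<^sup>2 / 2) / x ^ 3 - g 0 / 6) < r" unfolding q by simp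
    qed
  qed
  interpret lap f H "g 0" \<delta>2 C s \<beta>0
  proof
    show "\<And>x. 0 < f x" by (rule pos)
    show "continuous_on UNIV f" by (rule fcont)
    show "\<And>x. f x \<le> 1" by (rule fle1)
    show "H < 0" by (rule Hneg)
    show "0 < \<delta>2" by (rule d0)
    show "0 \<le> C" by (rule Cnn)
    show "\<And>x. \<bar>x\<bar> < \<delta>2 \<Longrightarrow> \<bar>ln (f x) - H * x\<^sup>2 / 2\<bar> \<le> C * \<bar>x\<bar> ^ 3" by (rule Cbound)
    show "((\<lambda>x. (ln (f x) - H * x\<^sup>2 / 2) / x ^ 3) \<longlongrightarrow> g 0 / 6) (at 0)" by (rule lim3)
    show "\<And>x. \<bar>x\<bar> < \<delta>2 \<Longrightarrow> f x \<le> exp (- x\<^sup>2 * \<bar>H\<bar> / 4)" by (rule cap1)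
    show "0 < s" "s < 1" by (rule s0, rule s1)
    show "\<And>x. \<delta>2 \<le> \<bar>x\<bar> \<Longrightarrow> f x \<le> s" by (rule sb)
    show "0 < \<beta>0" by (rule b0)
    show "\<And>k. k \<le> 10 \<Longrightarrow> integrable lborel (\<lambda>x. \<bar>x\<bar> ^ k * f x powr \<beta>0)" by (rule bi)
  qed
  show ?thesis using lap_main[OF lpos] by (simp add: g_def)
qed


end
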